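(* Consider the Sinus flow $U(y)=(1+\cos(\pi y))/2$ on $[-1,1]$ and fix $\beta\in[-\frac{\pi^2}{2},\frac{\pi^2}{2}]$. (i) When $\alpha^2>\frac{3\pi^2}{4}$, there exist no neutral modes in $H^2$ with wave number $\alpha$. (ii) When $\alpha^2=\frac{3\pi^2}{4}$, $(c=U_\beta,\alpha,\beta,\phi_0)$ with $\phi_0(y)=\cos(\pi y/2)$ and $U_\beta=\frac12-\frac\beta{\pi^2}$ is the only neutral mode in $H^2$ (up to scalar multiples of $\phi_0$).
   Context: A neutral mode in $H^2$ with wave number $\alpha>0$ is $(c,\alpha,\beta,\phi)$ with $c\in\mathbb{R}$ and $\phi\in H^2(-1,1)$ nontrivial solving $-\phi''+\alpha^2\phi-\frac{\beta-U''}{U-c}\phi=0$ on $(-1,1)\setminus\{U=c\}$, $\phi(\pm1)=0$. *)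

theory Defs
  imports "HOL-Analysis.Analysis"
begin

text \<open>Sobolev space H^2(-1,1) in one dimension (complex-valued functions):
  phi has a derivative phi' and a second (weak) derivative phi'' in L^2(-1,1),
  with phi and phi' absolutely continuous, i.e. they are indefinite integrals
  of phi' and phi'' respectively on [-1,1]. phi'' is a witness for the weak
  second derivative.\<close>
definition H2_with :: "(real \<Rightarrow> complex) \<Rightarrow> (real \<Rightarrow> complex) \<Rightarrow> (real \<Rightarrow> complex) \<Rightarrow> bool" where
  "H2_with \<phi> \<phi>' \<phi>'' \<longleftrightarrow>
     \<phi>'' absolutely_integrable_on {-1..1} \<and>
     (\<lambda>x. (norm (\<phi>'' x))\<^sup>2) integrable_on {-1..1} \<and>
     (\<forall>a b. -1 \<le> a \<longrightarrow> a \<le> b \<longrightarrow> b \<le> 1 \<longrightarrow>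
        (\<phi>'' has_integral (\<phi>' b - \<phi>' a)) {a..b} \<and>
        (\<phi>' has_integral (\<phi> b - \<phi> a)) {a..b})"

definition neutral_mode :: "(real \<Rightarrow> real) \<Rightarrow> real \<Rightarrow> real \<Rightarrow> real \<Rightarrow> (real \<Rightarrow> complex) \<Rightarrow> bool" where
  "neutral_mode U c \<alpha> \<beta> \<phi> \<longleftrightarrow>
     \<alpha> > 0 \<and>
     (\<exists>y\<in>{-1..1}. \<phi> y \<noteq> 0) \<and>
     \<phi> (-1) = 0 \<and> \<phi> 1 = 0 \<and>
     (\<exists>\<phi>' \<phi>''. H2_with \<phi> \<phi>' \<phi>'' \<and>
        (AE y in lebesgue. y \<in> {-1<..<1} \<longrightarrow> U y \<noteq> c \<longrightarrow>
           - \<phi>'' y + complex_of_real (\<alpha>\<^sup>2) * \<phi> y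
             - complex_of_real ((\<beta> - deriv (deriv U) y) / (U y - c)) * \<phi> y = 0))"

definition sinus_flow :: "real \<Rightarrow> real" where
  "sinus_flow y = (1 + cos (pi * y)) / 2"

end

theory Submission
  imports Defs
begin



lemma sin_ge_xcos: assumes "0 \<le> x" "x \<le> pi" shows "x * cos x \<le> sin x"
proof -
  have "(\<lambda>t. sin t - t * cos t) 0 \<le> (\<lambda>t. sin t - t * cos t) x"
  proof (rule DERIV_nonneg_imp_increasing_open[OF assms(1)])
    fix t assume t: "0 < t" "t < x"
    have "DERIV (\<lambda>t. sin t - t * cos t) t :> cos t - (cos t - t * sin t)"
      by (auto intro!: derivative_eq_intros)
    moreover have "0 \<le> t * sin t" using t assms by (intro mult_nonneg_nonneg sin_ge_zero) auto
    ultimately show "\<exists>y. DERIV (\<lambda>t. sin t - t * cos t) t :> y \<and> 0 \<le> y" by auto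
  qed (auto intro!: continuous_intros)
  then show ?thesis by simp
qed

lemma sin_ge_half: assumes "0 \<le> x" "x \<le> pi/2" shows "x/2 \<le> sin x"
proof -
  have "sin x = 2 * sin (x/2) * cos (x/2)" using sin_double[of "x/2"] by simp
  have c: "0 \<le> cos (x/2)" using assms by (intro cos_ge_zero) auto
  have "x/2 * cos (x/2) \<le> sin (x/2)" using sin_ge_xcos[of "x/2"] assms by auto
  hence "x/2 * cos (x/2) * cos (x/2) \<le> sin (x/2) * cos (x/2)"
    using c by (rule mult_right_mono)
  hence A: "x * (cos (x/2) * cos (x/2)) \<le> sin x"
    using \<open>sin x = _\<close> by (simp only: mult.assoc)
  moreover have "cos (x/2) * cos (x/2) = (1 + cos x)/2"
    using cos_double_cos[of "x/2"] by (simp add: power2_eq_square)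
  moreover have "0 \<le> cos x" using assms by (intro cos_ge_zero) auto
  hence "x * (1/2) \<le> x * ((1 + cos x)/2)" using assms by (intro mult_left_mono) auto
  ultimately show ?thesis by simp
qed

lemma h_low: assumes "-1 \<le> y" "y \<le> 1" shows "(1 - \<bar>y\<bar>)/2 \<le> cos (pi * y / 2)"
proof -
  have e1: "cos (pi * y / 2) = cos (pi * \<bar>y\<bar> / 2)" by (cases "y \<ge> 0") auto
  have e0: "sin (pi/2 - pi * \<bar>y\<bar> / 2) = cos (pi * \<bar>y\<bar> / 2)" by (simp add: sin_diff)
  have "pi * (1 - \<bar>y\<bar>) / 2 = pi/2 - pi * \<bar>y\<bar> / 2" by (simp add: field_simps)
  then have e2: "cos (pi * \<bar>y\<bar> / 2) = sin (pi * (1 - \<bar>y\<bar>) / 2)" by (simp only: e0)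
  have i1: "pi * (1 - \<bar>y\<bar>) / 4 \<le> sin (pi * (1 - \<bar>y\<bar>) / 2)"
    using sin_ge_half[of "pi * (1 - \<bar>y\<bar>) / 2"] assms by auto
  have A: "2 * (1 - \<bar>y\<bar>) \<le> pi * (1 - \<bar>y\<bar>)" using assms pi_gt3
    by (intro mult_right_mono) auto
  show ?thesis using e1 e2 i1 A by linarith
qed


lemma mvt_bound:
  fixes f f' :: "real \<Rightarrow> real"
  assumes "a \<le> b" "continuous_on {a..b} f"
    "\<And>y. a < y \<Longrightarrow> y < b \<Longrightarrow> DERIV f y :> f' y"
    "\<And>y. a < y \<Longrightarrow> y < b \<Longrightarrow> \<bar>f' y\<bar> \<le> B"
  shows "\<bar>f b - f a\<bar> \<le> B * (b - a)"
proof (cases "a = b")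
  case True thus ?thesis by simp
next
  case False
  hence ab: "a < b" using assms(1) by simp
  have "\<exists>l z. a < z \<and> z < b \<and> DERIV f z :> l \<and> f b - f a = (b - a) * l"
    using MVT[OF ab assms(2)] assms(3) real_differentiable_def by blast
  then obtain l z where z: "a < z" "z < b" "DERIV f z :> l" "f b - f a = (b - a) * l" by blast
  have "l = f' z" using DERIV_unique[OF z(3) assms(3)[OF z(1,2)]] .
  hence "\<bar>l\<bar> \<le> B" using assms(4)[OF z(1,2)] by simp
  hence "(b - a) * \<bar>l\<bar> \<le> (b - a) * B" using ab by (intro mult_left_mono) auto
  thus ?thesis using z(4) ab by (simp add: abs_mult mult.commute)
qed

lemma alg_id:
  fixes A B C H P Q :: real
  assumes "H \<noteq> 0"
  shows "(A - B*C/H)^2 + (Q + P)*B^2 = (A*A + (Q*B)*B) - (((A*B + A*B)*C + (-P*H)*(B*B))*H - B*B*C*C)/(H*H)"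
  using assms by (simp add: field_simps power2_eq_square)

lemma sturm:
  fixes u v q :: "real \<Rightarrow> real" and a b S :: real
  assumes ab: "a < b" "-1 \<le> a" "b \<le> 1"
    and cu: "continuous_on {a..b} u"
    and du: "\<And>y. a < y \<Longrightarrow> y < b \<Longrightarrow> DERIV u y :> v y"
    and du1: "\<And>y. a < y \<Longrightarrow> y < b \<Longrightarrow> DERIV v y :> q y * u y"
    and bd: "\<And>y. a < y \<Longrightarrow> y < b \<Longrightarrow> \<bar>v y\<bar> \<le> S"
    and qge: "\<And>y. a < y \<Longrightarrow> y < b \<Longrightarrow> -(pi^2/4) \<le> q y"
    and ua: "u a = 0" and ub: "u b = 0"
  shows "(\<exists>k. \<forall>y\<in>{a<..<b}. u y = k * cos (pi*y/2)) \<and> (\<forall>y\<in>{a<..<b}. (q y + pi^2/4) * (u y)^2 = 0)"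
proof -
  define h where "h y = cos (pi*y/2)" for y
  define h1 where "h1 y = -(pi/2) * sin (pi*y/2)" for y
  have hpos: "h y > 0" if "a < y" "y < b" for y
  proof -
    have "pi * (-1) < pi * y" using that ab by (intro mult_strict_left_mono) auto
    moreover have "pi * y < pi * 1" using that ab by (intro mult_strict_left_mono) auto
    ultimately show ?thesis unfolding h_def by (intro cos_gt_zero_pi) auto
  qed
  have dh: "DERIV h y :> h1 y" for y
    unfolding h_def h1_def by (auto intro!: derivative_eq_intros)
  have dh1: "DERIV h1 y :> -(pi^2/4) * h y" for y
    unfolding h_def h1_def by (auto intro!: derivative_eq_intros simp: power2_eq_square)
  have h1b: "\<bar>h1 y\<bar> \<le> pi/2" for y
    unfolding h1_def using abs_sin_le_one[of "pi*y/2"] pi_gt_zero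
    by (auto simp: abs_mult intro!: mult_left_le_one_le)
  define F where "F y = u y * v y - u y * u y * h1 y / h y" for y
  define E where "E y = (v y - u y * h1 y / h y)^2 + (q y + pi^2/4) * (u y)^2" for y
  have dF: "DERIV F y :> E y" if "a < y" "y < b" for y
  proof -
    have hy: "h y \<noteq> 0" using hpos[OF that] by force
    have d1: "DERIV (\<lambda>y. u y * v y) y :> v y * v y + (q y * u y) * u y"
      by (rule DERIV_mult[OF du[OF that] du1[OF that]])
    have d2: "DERIV (\<lambda>y. u y * u y) y :> v y * u y + v y * u y"
      by (rule DERIV_mult[OF du[OF that] du[OF that]])
    have d3: "DERIV (\<lambda>y. u y * u y * h1 y) y :> (v y * u y + v y * u y) * h1 y + (-(pi^2/4) * h y) * (u y * u y)"
      by (rule DERIV_mult[OF d2 dh1])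
    have d4: "DERIV (\<lambda>y. u y * u y * h1 y / h y) y :> (((v y * u y + v y * u y) * h1 y + (-(pi^2/4) * h y) * (u y * u y)) * h y - u y * u y * h1 y * h1 y) / (h y * h y)"
      by (rule DERIV_divide[OF d3 dh hy])
    have d5: "DERIV F y :> (v y * v y + (q y * u y) * u y) - (((v y * u y + v y * u y) * h1 y + (-(pi^2/4) * h y) * (u y * u y)) * h y - u y * u y * h1 y * h1 y) / (h y * h y)"
      unfolding F_def by (rule DERIV_diff[OF d1 d4])
    have eq: "E y = (v y * v y + (q y * u y) * u y) - (((v y * u y + v y * u y) * h1 y + (-(pi^2/4) * h y) * (u y * u y)) * h y - u y * u y * h1 y * h1 y) / (h y * h y)"
      unfolding E_def by (rule alg_id[OF hy])
    show ?thesis unfolding eq by (rule d5)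
  qed
  have Enn: "E y \<ge> 0" if "a < y" "y < b" for y
  proof -
    have "0 \<le> q y + pi^2/4" using qge[OF that] by simp
    thus ?thesis unfolding E_def by simp
  qed
  have mono: "F x \<le> F y" if "a < x" "x \<le> y" "y < b" for x y
  proof (rule DERIV_nonneg_imp_increasing_open[OF that(2)])
    fix t assume t: "x < t" "t < y"
    have "a < t" "t < b" using t that by auto
    thus "\<exists>D. DERIV F t :> D \<and> 0 \<le> D" using dF Enn by blast
  next
    show "continuous_on {x..y} F"
      using that by (intro continuous_at_imp_continuous_on ballI DERIV_isCont[OF dF]) auto
  qed
  have Spos: "S \<ge> 0" using bd[of "(a+b)/2"] ab by auto
  have ubd1: "\<bar>u y\<bar> \<le> S * (y - a)" if "a < y" "y < b" for y
  proof -
    have "continuous_on {a..y} u" by (rule continuous_on_subset[OF cu]) (use that in auto)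
    thus ?thesis using mvt_bound[of a y u v S] that ua du bd by auto
  qed
  have ubd2: "\<bar>u y\<bar> \<le> S * (b - y)" if "a < y" "y < b" for y
  proof -
    have "continuous_on {y..b} u" by (rule continuous_on_subset[OF cu]) (use that in auto)
    thus ?thesis using mvt_bound[of y b u v S] that ub du bd by auto
  qed
  have Fgen: "\<bar>F y\<bar> \<le> (1 + pi) * S^2 * w"
    if y: "a < y" "y < b" and w: "w > 0" "\<bar>u y\<bar> \<le> S * w" "w/2 \<le> h y" for y w
  proof -
    have t1: "\<bar>u y * v y\<bar> \<le> S * w * S"
      unfolding abs_mult using y w bd[OF y] by (intro mult_mono) auto
    have "\<bar>u y\<bar>^2 \<le> (S * w)^2" using w by (intro power_mono) auto
    hence t2: "(u y)^2 \<le> (S * w)^2" by simp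
    have "(u y)^2 * \<bar>h1 y\<bar> \<le> (S * w)^2 * (pi/2)"
      using t2 h1b[of y] by (intro mult_mono) auto
    hence "(u y)^2 * \<bar>h1 y\<bar> / h y \<le> (S * w)^2 * (pi/2) / (w/2)"
      using w by (intro frac_le) auto
    also have "\<dots> = pi * S^2 * w" using w by (simp add: field_simps power2_eq_square)
    finally have t3': "\<bar>(u y)^2 * h1 y / h y\<bar> \<le> pi * S^2 * w"
      using hpos[OF y] by (simp add: abs_mult)
    hence t3: "\<bar>u y * u y * h1 y / h y\<bar> \<le> pi * S^2 * w" by (simp add: power2_eq_square)
    have "\<bar>F y\<bar> \<le> \<bar>u y * v y\<bar> + \<bar>u y * u y * h1 y / h y\<bar>"
      unfolding F_def by (rule abs_triangle_ineq4)
    also have "\<dots> \<le> S * w * S + pi * S^2 * w" using t1 t3 by linarith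
    also have "\<dots> = (1 + pi) * S^2 * w" by (simp add: algebra_simps power2_eq_square)
    finally show ?thesis .
  qed
  define C where "C = (1 + pi) * S^2"
  have Cnn: "C \<ge> 0" unfolding C_def by auto
  have hlow': "(1 - \<bar>y\<bar>)/2 \<le> h y" if "-1 \<le> y" "y \<le> 1" for y
    unfolding h_def using h_low[OF that] .
  have Fa: "\<bar>F y\<bar> \<le> C * (y - a)" if "a < y" "2*y \<le> a+b" for y
  proof -
    have yb: "y < b" using that ab by linarith
    have "y - a \<le> 1 - \<bar>y\<bar>" using that ab by (cases "y \<ge> 0") auto
    hence "(y - a)/2 \<le> h y" using hlow'[of y] that ab yb by auto
    thus ?thesis unfolding C_def using Fgen[of y "y - a"] that yb ubd1[of y] by auto
  qed
  have Fb: "\<bar>F y\<bar> \<le> C * (b - y)" if "a+b \<le> 2*y" "y < b" for y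
  proof -
    have ya: "a < y" using that ab by linarith
    have "b - y \<le> 1 - \<bar>y\<bar>" using that ab by (cases "y \<ge> 0") auto
    hence "(b - y)/2 \<le> h y" using hlow'[of y] that ab ya by auto
    thus ?thesis unfolding C_def using Fgen[of y "b - y"] that ya ubd2[of y] by auto
  qed
  have Fle: "F y \<le> F x" if "a < x" "x \<le> y" "y < b" for x y
  proof (rule ccontr)
    assume "\<not> F y \<le> F x"
    define D where "D = F y - F x"
    have Dp: "D > 0" using \<open>\<not> F y \<le> F x\<close> unfolding D_def by simp
    define t0 where "t0 = min (min (x - a) (b - y)) (min ((b - a)/2) (D / (2*C+1)))"
    have t0: "t0 \<le> x - a" "t0 \<le> b - y" "t0 \<le> (b - a)/2" "t0 \<le> D / (2*C+1)"
      unfolding t0_def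
      by (rule order_trans[OF min.cobounded1 min.cobounded1], rule order_trans[OF min.cobounded1 min.cobounded2],
          rule order_trans[OF min.cobounded2 min.cobounded1], rule order_trans[OF min.cobounded2 min.cobounded2])
    have t0p: "t0 > 0" unfolding t0_def using that Dp Cnn ab by auto
    define t where "t = t0 / 2"
    have tp: "t > 0" unfolding t_def using t0p by auto
    have "2 * t0 \<le> b - a" using t0(3) by simp
    moreover have "(2*C+1) * t0 \<le> D" using t0(4) Cnn by (simp add: le_divide_eq mult.commute)
    ultimately have t1: "t < x - a" "t < b - y" "4*t \<le> b-a" "(2*C+1) * t \<le> D/2"
      unfolding t_def using t0 t0p by auto
    have "(2*C+1) * t \<le> D/2" using t1(4) .
    moreover have "2*C*t \<le> (2*C+1)*t" using tp by (simp add: algebra_simps)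
    moreover have "F (a + t) \<le> F x" using mono[of "a+t" x] t1 that tp by auto
    moreover have "F y \<le> F (b - t)" using mono[of y "b - t"] t1 that tp by auto
    moreover have "\<bar>F (a+t)\<bar> \<le> C * t" using Fa[of "a+t"] t1 tp by auto
    hence "- (C * t) \<le> F (a+t)" by (metis abs_le_D2 minus_le_iff)
    moreover have "\<bar>F (b-t)\<bar> \<le> C * t" using Fb[of "b-t"] t1 tp by auto
    hence "F (b-t) \<le> C * t" by (rule abs_le_D1)
    moreover have "(2*C+1)*t = 2*(C*t) + t" "2*C*t = 2*(C*t)" by (simp_all add: algebra_simps)
    ultimately show False using Dp tp D_def by linarith
  qed
  define m where "m = (a + b)/2"
  have m: "a < m" "m < b" unfolding m_def using ab by auto
  have Fc: "F y = F m" if "a < y" "y < b" for y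
  proof (cases "y \<le> m")
    case True
    then have "F y \<le> F m" "F m \<le> F y" using mono[of y m] Fle[of y m] that m by auto
    thus ?thesis by linarith
  next
    case False
    then have "F m \<le> F y" "F y \<le> F m" using mono[of m y] Fle[of m y] that m by auto
    thus ?thesis by linarith
  qed
  have E0: "E y = 0" if "a < y" "y < b" for y
  proof -
    have "DERIV (\<lambda>_. F m) y :> E y"
      by (rule has_field_derivative_transform_within_open[OF dF[OF that], of "{a<..<b}"])
         (use that Fc in auto)
    thus ?thesis using DERIV_unique DERIV_const by blast
  qed
  have P1: "v y - u y * h1 y / h y = 0" and P2: "(q y + pi^2/4) * (u y)^2 = 0"
    if "a < y" "y < b" for y
  proof -
    have q0: "0 \<le> q y + pi^2/4" using qge[OF that] by simp
    have Y: "0 \<le> (q y + pi^2/4) * (u y)^2" using q0 by simp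
    have X: "0 \<le> (v y - u y * h1 y / h y)^2" by simp
    have e: "(v y - u y * h1 y / h y)^2 + (q y + pi^2/4) * (u y)^2 = 0"
      using E0[OF that] unfolding E_def .
    show "(q y + pi^2/4) * (u y)^2 = 0" using X Y e by linarith
    have "(v y - u y * h1 y / h y)^2 = 0" using X Y e by linarith
    thus "v y - u y * h1 y / h y = 0" by simp
  qed
  define r where "r y = u y / h y" for y
  have dr: "(r has_field_derivative 0) (at y within {a<..<b})" if "y \<in> {a<..<b}" for y
  proof -
    have y: "a < y" "y < b" using that by auto
    have hy: "h y \<noteq> 0" using hpos[OF y] by force
    have "DERIV r y :> (v y * h y - u y * h1 y) / (h y * h y)"
      unfolding r_def using hy by (auto intro!: derivative_eq_intros du[OF y] dh)
    moreover have "(v y * h y - u y * h1 y) / (h y * h y) = 0"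
      using P1[OF y] hy by (simp add: field_simps)
    ultimately show ?thesis by (auto intro: has_field_derivative_at_within)
  qed
  obtain k where k: "\<forall>y\<in>{a<..<b}. r y = k"
    using has_field_derivative_zero_constant[OF convex_real_interval(8) dr] by blast
  have "\<forall>y\<in>{a<..<b}. u y = k * cos (pi*y/2)"
  proof
    fix y assume y: "y \<in> {a<..<b}"
    hence "h y \<noteq> 0" using hpos by force
    moreover have "r y = k" using k y by blast
    ultimately have "u y = k * h y" unfolding r_def by (simp add: field_simps)
    thus "u y = k * cos (pi*y/2)" unfolding h_def .
  qed
  thus ?thesis using P2 by auto
qed

lemma zero_step:
  fixes u v g :: "real \<Rightarrow> real"
  assumes ab: "a < b" and cu: "continuous_on {a..b} u" and cu1: "continuous_on {a..b} v"
    and du: "\<And>y. a < y \<Longrightarrow> y < b \<Longrightarrow> DERIV u y :> v y"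
    and du1: "\<And>y. a < y \<Longrightarrow> y < b \<Longrightarrow> DERIV v y :> g y"
    and gb: "\<And>y. a < y \<Longrightarrow> y < b \<Longrightarrow> \<bar>g y\<bar> \<le> M * \<bar>u y\<bar> / (y - a)"
    and M: "M > 0" and ua: "u a = 0" and u1a: "v a = 0"
  shows "\<forall>y\<in>{a..min b (a + 1/(2*M))}. u y = 0 \<and> v y = 0"
proof -
  define e where "e = min b (a + 1/(2*M))"
  have ae: "a < e" "e \<le> b" "e - a \<le> 1/(2*M)" unfolding e_def using ab M by auto
  have cu1e: "continuous_on {a..e} v" using continuous_on_subset[OF cu1] ae by auto
  have "continuous_on {a..e} (\<lambda>y. \<bar>v y\<bar>)" using cu1e by (intro continuous_intros)
  then obtain x0 where x0: "x0 \<in> {a..e}" "\<forall>y\<in>{a..e}. \<bar>v y\<bar> \<le> \<bar>v x0\<bar>"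
    using continuous_attains_sup[of "{a..e}" "\<lambda>y. \<bar>v y\<bar>"] ae by auto
  define S where "S = \<bar>v x0\<bar>"
  have Snn: "S \<ge> 0" unfolding S_def by simp
  have uS: "\<bar>u y\<bar> \<le> S * (y - a)" if "a \<le> y" "y \<le> e" for y
  proof -
    have "\<bar>u y - u a\<bar> \<le> S * (y - a)"
    proof (rule mvt_bound[where f'=v])
      show "continuous_on {a..y} u" using continuous_on_subset[OF cu] that ae by auto
      show "DERIV u t :> v t" if "a < t" "t < y" for t using du that \<open>y \<le> e\<close> ae by auto
      show "\<bar>v t\<bar> \<le> S" if "a < t" "t < y" for t using x0 that \<open>y \<le> e\<close> unfolding S_def by auto
    qed (use that in auto)
    thus ?thesis using ua by simp
  qed
  have gS: "\<bar>g y\<bar> \<le> M * S" if "a < y" "y < e" for y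
  proof -
    have "\<bar>g y\<bar> \<le> M * \<bar>u y\<bar> / (y - a)" using gb that ae by auto
    also have "\<dots> \<le> M * (S * (y - a)) / (y - a)"
      using uS[of y] that M by (intro divide_right_mono mult_left_mono) auto
    also have "\<dots> = M * S" using that by auto
    finally show ?thesis .
  qed
  have "\<bar>v x0 - v a\<bar> \<le> (M*S) * (x0 - a)"
  proof (rule mvt_bound[where f'=g])
    show "continuous_on {a..x0} v" using continuous_on_subset[OF cu1] x0 ae by auto
    show "DERIV v t :> g t" if "a < t" "t < x0" for t using du1 that x0 ae by auto
    show "\<bar>g t\<bar> \<le> M * S" if "a < t" "t < x0" for t using gS that x0 by auto
  qed (use x0 in auto)
  moreover have "(M*S)*(x0 - a) \<le> (M*S) * (1/(2*M))"
    using x0 ae M Snn by (intro mult_left_mono) auto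
  moreover have "(M*S)*(1/(2*M)) = S/2" using M by simp
  ultimately have "S \<le> S/2" using u1a unfolding S_def by auto
  hence S0: "S = 0" using Snn by auto
  show ?thesis
  proof
    fix y assume y: "y \<in> {a..min b (a + 1/(2*M))}"
    hence "y \<in> {a..e}" unfolding e_def .
    thus "u y = 0 \<and> v y = 0" using uS[of y] x0(2) S0 unfolding S_def by auto
  qed
qed

lemma zero_prop:
  fixes u v g :: "real \<Rightarrow> real"
  assumes ab: "a < b" and cu: "continuous_on {a..b} u" and cu1: "continuous_on {a..b} v"
    and du: "\<And>y. a < y \<Longrightarrow> y < b \<Longrightarrow> DERIV u y :> v y"
    and du1: "\<And>y. a < y \<Longrightarrow> y < b \<Longrightarrow> DERIV v y :> g y"
    and gb: "\<And>y. a < y \<Longrightarrow> y < b \<Longrightarrow> \<bar>g y\<bar> \<le> M * \<bar>u y\<bar> / (y - a)"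
    and M: "M > 0" and ua: "u a = 0" and u1a: "v a = 0"
  shows "\<forall>y\<in>{a..b}. u y = 0"
proof -
  have ind: "\<forall>y\<in>{a..min b (a + real n/(2*M))}. u y = 0 \<and> v y = 0" for n :: nat
  proof (induction n)
    case 0 thus ?case using ua u1a ab by auto
  next
    case (Suc n)
    define a' where "a' = min b (a + real n/(2*M))"
    have IH: "\<forall>y\<in>{a..a'}. u y = 0 \<and> v y = 0" using Suc.IH unfolding a'_def .
    show ?case
    proof (cases "a' < b")
      case False
      hence "a' = b" unfolding a'_def by auto
      thus ?thesis using IH by auto
    next
      case True
      have a'a: "a \<le> a'" unfolding a'_def using ab M by auto
      have a'eq: "a' = a + real n/(2*M)" using True unfolding a'_def by auto
      have step: "\<forall>y\<in>{a'..min b (a' + 1/(2*M))}. u y = 0 \<and> v y = 0"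
      proof (rule zero_step[OF True])
        show "continuous_on {a'..b} u" using continuous_on_subset[OF cu] a'a by auto
        show "continuous_on {a'..b} v" using continuous_on_subset[OF cu1] a'a by auto
        show "DERIV u y :> v y" if "a' < y" "y < b" for y using du that a'a by auto
        show "DERIV v y :> g y" if "a' < y" "y < b" for y using du1 that a'a by auto
        show "\<bar>g y\<bar> \<le> M * \<bar>u y\<bar> / (y - a')" if "a' < y" "y < b" for y
        proof -
          have "\<bar>g y\<bar> \<le> M * \<bar>u y\<bar> / (y - a)" using gb that a'a by auto
          also have "\<dots> \<le> M * \<bar>u y\<bar> / (y - a')"
            using that a'a M by (intro divide_left_mono) auto
          finally show ?thesis .
        qed
        show "M > 0" using M .
        show "u a' = 0" "v a' = 0" using IH a'a by auto
      qed
      show ?thesis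
      proof
        fix y assume y: "y \<in> {a..min b (a + real (Suc n)/(2*M))}"
        show "u y = 0 \<and> v y = 0"
        proof (cases "y \<le> a'")
          case True thus ?thesis using IH y by auto
        next
          case False
          have "a' + 1/(2*M) = a + real (Suc n)/(2*M)" using a'eq M by (simp add: field_simps)
          thus ?thesis using step y False by auto
        qed
      qed
    qed
  qed
  obtain n :: nat where n: "2*M*(b - a) < real n" using reals_Archimedean2 by blast
  have "b \<le> a + real n/(2*M)" using n M by (simp add: field_simps)
  hence "min b (a + real n/(2*M)) = b" by auto
  thus ?thesis using ind[of n] by auto
qed

lemma zero_prop_left:
  fixes u v g :: "real \<Rightarrow> real"
  assumes ab: "a < b" and cu: "continuous_on {a..b} u" and cu1: "continuous_on {a..b} v"
    and du: "\<And>y. a < y \<Longrightarrow> y < b \<Longrightarrow> DERIV u y :> v y"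
    and du1: "\<And>y. a < y \<Longrightarrow> y < b \<Longrightarrow> DERIV v y :> g y"
    and gb: "\<And>y. a < y \<Longrightarrow> y < b \<Longrightarrow> \<bar>g y\<bar> \<le> M * \<bar>u y\<bar> / (b - y)"
    and M: "M > 0" and ub: "u b = 0" and u1b: "v b = 0"
  shows "\<forall>y\<in>{a..b}. u y = 0"
proof -
  have "\<forall>y\<in>{-b..-a}. u (-y) = 0"
  proof (rule zero_prop[where v="\<lambda>y. - v (-y)" and g="\<lambda>y. g (-y)" and M=M])
    show "-b < -a" using ab by simp
    show "continuous_on {-b..-a} (\<lambda>y. u (-y))"
      by (rule continuous_on_compose2[OF cu]) (auto intro: continuous_intros)
    have "continuous_on {-b..-a} (\<lambda>y. v (-y))"
      by (rule continuous_on_compose2[OF cu1]) (auto intro: continuous_intros)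
    thus "continuous_on {-b..-a} (\<lambda>y. - v (-y))" by (intro continuous_intros)
    show "DERIV (\<lambda>y. u (-y)) y :> - v (-y)" if "-b < y" "y < -a" for y
    proof -
      have "DERIV (\<lambda>y. u (-y)) y :> v (-y) * (-1)"
        using that by (intro DERIV_chain2[where f=u and g="\<lambda>y. -y"] du) (auto intro!: derivative_eq_intros)
      thus ?thesis by simp
    qed
    show "DERIV (\<lambda>y. - v (-y)) y :> g (-y)" if "-b < y" "y < -a" for y
    proof -
      have "DERIV (\<lambda>y. v (-y)) y :> g (-y) * (-1)"
        using that by (intro DERIV_chain2[where f=v and g="\<lambda>y. -y"] du1) (auto intro!: derivative_eq_intros)
      from DERIV_minus[OF this] show ?thesis by simp
    qed
    show "\<bar>g (-y)\<bar> \<le> M * \<bar>u (-y)\<bar> / (y - -b)" if "-b < y" "y < -a" for y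
      using gb[of "-y"] that by (simp add: add.commute)
    show "M > 0" using M .
    show "u (- (-b)) = 0" "- v (- (-b)) = 0" using ub u1b by auto
  qed
  thus ?thesis by (metis atLeastAtMost_iff minus_le_iff neg_le_iff_le minus_minus)
qed

lemma zero_at_sing:
  fixes u v q :: "real \<Rightarrow> real"
  assumes dp: "\<delta> > 0" and cu: "continuous_on {z..z+\<delta>} u" and cu1: "continuous_on {z..z+\<delta>} v"
    and du1: "\<And>y. z < y \<Longrightarrow> y < z + \<delta> \<Longrightarrow> DERIV v y :> q y * u y"
    and sq: "\<And>y. z < y \<Longrightarrow> y < z + \<delta> \<Longrightarrow> s * q y \<ge> m / (y - z)"
    and m: "m > 0"
  shows "u z = 0"
proof (rule ccontr)
  assume p0: "u z \<noteq> 0"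
  define p where "p = u z"
  have pp: "p*p > 0" using p0 unfolding p_def by (metis not_real_square_gt_zero)
  have "continuous (at z within {z..z+\<delta>}) u" using cu dp by (simp add: continuous_on_eq_continuous_within)
  hence cz: "\<forall>\<epsilon>>0. \<exists>d>0. \<forall>y\<in>{z..z+\<delta>}. dist y z < d \<longrightarrow> dist (u y) (u z) < \<epsilon>"
    unfolding continuous_within_eps_delta .
  have "\<bar>p\<bar>/2 > 0" using p0 p_def by auto
  then obtain d where d0: "d > 0" and dd: "\<forall>y\<in>{z..z+\<delta>}. dist y z < d \<longrightarrow> dist (u y) (u z) < \<bar>p\<bar>/2"
    using cz by blast
  have d: "d > 0" "\<And>y. y \<in> {z..z+\<delta>} \<Longrightarrow> \<bar>y - z\<bar> < d \<Longrightarrow> \<bar>u y - p\<bar> < \<bar>p\<bar>/2"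
    using d0 dd unfolding dist_real_def p_def by auto
  define d1 where "d1 = min \<delta> d"
  have d1: "d1 > 0" "d1 \<le> \<delta>" "d1 \<le> d" using d dp by (auto simp: d1_def)
  have pu: "p * u y \<ge> p*p/2" if "z \<le> y" "y < z + d1" for y
  proof -
    have "\<bar>u y - p\<bar> < \<bar>p\<bar>/2" using d(2)[of y] that d1 by auto
    hence "\<bar>p\<bar> * \<bar>u y - p\<bar> \<le> \<bar>p\<bar> * (\<bar>p\<bar>/2)" by (intro mult_left_mono) auto
    hence "\<bar>p * (u y - p)\<bar> \<le> p * p / 2" by (simp add: abs_mult)
    hence "- (p * (u y - p)) \<le> p * p / 2" by (rule abs_le_D2)
    thus ?thesis by (simp add: algebra_simps)
  qed
  define G where "G y = s * p * v y" for y
  define C where "C = m * (p*p/2)"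
  have Cp: "C > 0" using m pp unfolding C_def by auto
  define H where "H y = G y - C * ln (y - z)" for y
  have dH: "DERIV H y :> s * p * (q y * u y) - C / (y - z)" if "z < y" "y < z + d1" for y
  proof -
    have "DERIV H y :> s * p * (q y * u y) - C * (1 / (y - z))"
      unfolding H_def G_def using that d1 by (auto intro!: derivative_eq_intros du1)
    thus ?thesis by simp
  qed
  have Hnn: "s * p * (q y * u y) - C/(y - z) \<ge> 0" if "z < y" "y < z + d1" for y
  proof -
    have "s * q y \<ge> m/(y-z)" using sq that d1 by auto
    moreover have "p * u y \<ge> p*p/2" using pu that by auto
    moreover have "m/(y-z) > 0" using m that by auto
    ultimately have "(s * q y) * (p * u y) \<ge> (m/(y-z)) * (p*p/2)" using pp by (intro mult_mono) auto
    moreover have "(m/(y-z)) * (p*p/2) = C/(y-z)" unfolding C_def by simp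
    ultimately show ?thesis by (simp add: algebra_simps)
  qed
  define y1 where "y1 = z + d1/2"
  have Hmono: "H y \<le> H y1" if "z < y" "y \<le> y1" for y
  proof (rule DERIV_nonneg_imp_increasing_open[OF that(2)])
    fix t assume t: "y < t" "t < y1"
    have "z < t" "t < z + d1" using t that d1 unfolding y1_def by auto
    thus "\<exists>D. DERIV H t :> D \<and> 0 \<le> D" using dH Hnn by blast
  next
    show "continuous_on {y..y1} H"
      using that d1 unfolding y1_def by (intro continuous_at_imp_continuous_on ballI DERIV_isCont[OF dH]) auto
  qed
  have "continuous_on {z..z+\<delta>} (\<lambda>y. \<bar>G y\<bar>)" unfolding G_def using cu1 by (intro continuous_intros)
  then obtain x0 where x0: "\<forall>y\<in>{z..z+\<delta>}. \<bar>G y\<bar> \<le> \<bar>G x0\<bar>"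
    using continuous_attains_sup[of "{z..z+\<delta>}" "\<lambda>y. \<bar>G y\<bar>"] dp by auto
  define B where "B = \<bar>G x0\<bar>"
  define t where "t = min (d1/2) (exp ((- B - 1 - H y1)/C))"
  have tp: "t > 0" "t \<le> d1/2" using d1 by (auto simp: t_def)
  have "ln t \<le> ln (exp ((- B - 1 - H y1)/C))" using tp by (subst ln_le_cancel_iff) (auto simp: t_def)
  hence "ln t \<le> (- B - 1 - H y1)/C" by simp
  hence lt: "C * ln t \<le> - B - 1 - H y1" using Cp by (simp add: field_simps)
  have "H (z + t) \<le> H y1" using Hmono[of "z+t"] tp unfolding y1_def by auto
  hence "G (z+t) \<le> H y1 + C * ln t" unfolding H_def by simp
  hence "G (z+t) \<le> - B - 1" using lt by linarith
  moreover have "\<bar>G (z+t)\<bar> \<le> B" using x0 tp d1 unfolding B_def by auto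
  ultimately show False by linarith
qed

lemma zero_closure:
  fixes f :: "real \<Rightarrow> real"
  assumes "a < b" "continuous_on {a..b} f" "\<And>y. a < y \<Longrightarrow> y < b \<Longrightarrow> f y = 0"
  shows "f a = 0" "f b = 0"
proof -
  have cl: "closed {x \<in> {a..b}. f x = 0}"
    using continuous_closed_preimage_constant[OF assms(2)] by auto
  have "{a<..<b} \<subseteq> {x \<in> {a..b}. f x = 0}" using assms(3) by auto
  hence "closure {a<..<b} \<subseteq> {x \<in> {a..b}. f x = 0}" using cl by (rule closure_minimal)
  hence "{a..b} \<subseteq> {x \<in> {a..b}. f x = 0}" using assms(1) by simp
  hence H: "\<forall>x\<in>{a..b}. f x = 0" by blast
  thus "f a = 0" "f b = 0" using assms(1) by auto
qed

lemma U_even: "sinus_flow (-y) = sinus_flow y" by (simp add: sinus_flow_def)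

lemma U_lip: "\<bar>sinus_flow y - sinus_flow z\<bar> \<le> pi/2 * \<bar>y - z\<bar>"
proof -
  have "\<bar>cos (pi*y) - cos (pi*z)\<bar> = 2 * \<bar>sin ((pi*y + pi*z)/2)\<bar> * \<bar>sin ((pi*z - pi*y)/2)\<bar>"
    by (simp add: cos_diff_cos abs_mult)
  also have "\<dots> \<le> 2 * 1 * \<bar>(pi*z - pi*y)/2\<bar>"
    by (intro mult_mono abs_sin_le_one abs_sin_x_le_abs_x) auto
  also have "\<dots> = pi * \<bar>y - z\<bar>"
  proof -
    have e: "(pi*z - pi*y)/2 = (pi/2) * (z - y)" by (simp add: algebra_simps)
    have "\<bar>(pi/2) * (z - y)\<bar> = (pi/2) * \<bar>y - z\<bar>" by (simp add: abs_mult abs_minus_commute)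
    hence "\<bar>(pi*z - pi*y)/2\<bar> = pi/2 * \<bar>y - z\<bar>" by (simp only: e)
    thus ?thesis by simp
  qed
  finally have "\<bar>cos (pi*y) - cos (pi*z)\<bar> \<le> pi * \<bar>y - z\<bar>" .
  moreover have e: "sinus_flow y - sinus_flow z = (cos (pi*y) - cos (pi*z))/2"
    by (simp add: sinus_flow_def field_simps)
  have "\<bar>sinus_flow y - sinus_flow z\<bar> = \<bar>cos (pi*y) - cos (pi*z)\<bar> / 2" unfolding e by simp
  ultimately show ?thesis by simp
qed

lemma sin_lb: assumes "0 \<le> x" "x \<le> pi" shows "min x (pi - x) / 2 \<le> sin x"
proof (cases "x \<le> pi/2")
  case True
  thus ?thesis using sin_ge_half[of x] assms by (simp add: min_def)
next
  case False
  have "(pi - x)/2 \<le> sin (pi - x)" using sin_ge_half[of "pi - x"] assms False by auto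
  thus ?thesis by (simp add: min_def)
qed

lemma cos_abs_pi: "cos (pi * y) = cos (pi * \<bar>y\<bar>)"
  by (cases "y \<ge> 0") auto

lemma U_pos: assumes "-1 < y" "y < 1" shows "sinus_flow y > 0"
proof -
  have l: "pi * \<bar>y\<bar> < pi * 1" by (rule mult_strict_left_mono) (use assms in auto)
  have "cos pi < cos (pi * \<bar>y\<bar>)"
    using l by (subst cos_mono_less_eq) auto
  thus ?thesis unfolding sinus_flow_def using cos_abs_pi[of y] by simp
qed

lemma U_le1: "sinus_flow y \<le> 1" unfolding sinus_flow_def by simp

lemma U_lt1: assumes "0 < \<bar>y\<bar>" "\<bar>y\<bar> < 1" shows "sinus_flow y < 1"
proof -
  have l: "pi * \<bar>y\<bar> < pi * 1" by (rule mult_strict_left_mono) (use assms in auto)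
  have "cos (pi * \<bar>y\<bar>) < cos 0"
    using l assms by (subst cos_mono_less_eq) auto
  thus ?thesis unfolding sinus_flow_def using cos_abs_pi[of y] by simp
qed

definition yc :: "real \<Rightarrow> real" where "yc c = arccos (2*c - 1) / pi"

lemma yc_props:
  assumes "0 < c" "c < 1"
  shows "0 < yc c" "yc c < 1" "sinus_flow (yc c) = c" "sinus_flow (- yc c) = c"
    "\<And>y. \<bar>y\<bar> \<le> 1 \<Longrightarrow> sinus_flow y > c \<longleftrightarrow> \<bar>y\<bar> < yc c"
    "\<And>y. \<bar>y\<bar> \<le> 1 \<Longrightarrow> sinus_flow y < c \<longleftrightarrow> yc c < \<bar>y\<bar>"
proof -
  have ar: "0 < arccos (2*c - 1)" "arccos (2*c - 1) < pi"
    using arccos_lt_bounded[of "2*c - 1"] assms by auto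
  show y0: "0 < yc c" "yc c < 1" unfolding yc_def using ar by (auto simp: field_simps)
  have pyc: "pi * yc c = arccos (2*c - 1)" unfolding yc_def by simp
  show U1: "sinus_flow (yc c) = c" unfolding sinus_flow_def pyc using assms by simp
  thus "sinus_flow (- yc c) = c" using U_even by simp
  have key: "sinus_flow y - c = (cos (pi * \<bar>y\<bar>) - cos (pi * yc c))/2" for y
    using cos_abs_pi[of y] U1 unfolding sinus_flow_def by (simp add: field_simps)
  fix y :: real assume y: "\<bar>y\<bar> \<le> 1"
  have r: "0 \<le> pi * \<bar>y\<bar>" "pi * \<bar>y\<bar> \<le> pi" "0 \<le> pi * yc c" "pi * yc c \<le> pi"
    using y y0 by (auto simp: mult_le_cancel_left1)
  have "cos (pi * yc c) < cos (pi * \<bar>y\<bar>) \<longleftrightarrow> pi * \<bar>y\<bar> < pi * yc c"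
    using r by (intro cos_mono_less_eq) auto
  thus "sinus_flow y > c \<longleftrightarrow> \<bar>y\<bar> < yc c" using key[of y] by auto
  have "cos (pi * \<bar>y\<bar>) < cos (pi * yc c) \<longleftrightarrow> pi * yc c < pi * \<bar>y\<bar>"
    using r by (intro cos_mono_less_eq) auto
  thus "sinus_flow y < c \<longleftrightarrow> yc c < \<bar>y\<bar>" using key[of y] by auto
qed

lemma LB_out:
  assumes "0 < w" "w < 1"
  shows "\<exists>k>0. \<forall>y. w < y \<longrightarrow> y < 1 \<longrightarrow> cos (pi*w) - cos (pi*y) \<ge> k * (y - w)"
proof -
  have pw0: "0 < pi*w" "pi*w < pi" using assms by (auto intro: mult_strict_left_mono[of w 1 pi, simplified])
  define kk1 where "kk1 = min (pi*w) ((pi - pi*w)/2) / 2"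
  have kk1p: "kk1 > 0" unfolding kk1_def using pw0 by auto
  have "\<forall>y. w < y \<longrightarrow> y < 1 \<longrightarrow> cos (pi*w) - cos (pi*y) \<ge> (pi*kk1/2) * (y - w)"
  proof (intro allI impI)
    fix y assume y: "w < y" "y < 1"
    have py: "pi*w < pi*y" "pi*y < pi" using y by (auto intro: mult_strict_left_mono[of _ _ pi, simplified])
    have e: "cos (pi*w) - cos (pi*y) = 2 * sin ((pi*w + pi*y)/2) * sin ((pi*y - pi*w)/2)"
      by (rule cos_diff_cos)
    define th where "th = (pi*w + pi*y)/2"
    have th1: "pi*w \<le> th" unfolding th_def add_divide_distrib diff_divide_distrib using py pw0 by linarith
    have th2: "(pi - pi*w)/2 \<le> pi - th" unfolding th_def add_divide_distrib diff_divide_distrib using py pw0 by linarith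
    have th3: "0 \<le> th" unfolding th_def add_divide_distrib diff_divide_distrib using py pw0 by linarith
    have th4: "th \<le> pi" unfolding th_def add_divide_distrib diff_divide_distrib using py pw0 by linarith
    note th = th1 th2 th3 th4
    have mn: "min (pi*w) ((pi - pi*w)/2) \<le> min th (pi - th)" using th(1,2) by (rule min.mono)
    have A: "kk1 \<le> sin th"
    proof -
      have "kk1 \<le> min th (pi - th) / 2" unfolding kk1_def using mn by (rule divide_right_mono) simp
      thus ?thesis using sin_lb[OF th(3,4)] by linarith
    qed
    have B: "(pi*y - pi*w)/2 / 2 \<le> sin ((pi*y - pi*w)/2)"
    proof -
      have "0 \<le> (pi*y - pi*w)/2" using py pw0 unfolding diff_divide_distrib by linarith
      moreover have "(pi*y - pi*w)/2 \<le> pi/2" using py pw0 unfolding diff_divide_distrib by linarith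
      ultimately show ?thesis by (rule sin_ge_half)
    qed
    have ineq: "2 * kk1 * ((pi*y - pi*w)/2 / 2) \<le> 2 * sin th * sin ((pi*y - pi*w)/2)"
      using A B kk1p py by (intro mult_mono) (auto simp del: mult_less_cancel_left_pos)
    have eqn: "(pi*kk1/2) * (y - w) = 2 * kk1 * ((pi*y - pi*w)/2 / 2)" by (simp add: field_simps)
    have "(pi*kk1/2) * (y - w) \<le> 2 * sin th * sin ((pi*y - pi*w)/2)" unfolding eqn by (rule ineq)
    thus "cos (pi*w) - cos (pi*y) \<ge> (pi*kk1/2) * (y - w)" unfolding e th_def .
  qed
  moreover have "pi*kk1/2 > 0" using kk1p by auto
  ultimately show ?thesis by blast
qed

lemma LB_mid:
  assumes "0 < w" "w < 1"
  shows "\<exists>k>0. \<forall>y. -w < y \<longrightarrow> y \<le> 0 \<longrightarrow> cos (pi*y) - cos (pi*w) \<ge> k * (y + w)"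
proof -
  have pw0: "0 < pi*w" "pi*w < pi" using assms by (auto intro: mult_strict_left_mono[of w 1 pi, simplified])
  define kk2 where "kk2 = min (pi*w/2) (pi - pi*w) / 2"
  have kk2p: "kk2 > 0" unfolding kk2_def using pw0 by auto
  have "\<forall>y. -w < y \<longrightarrow> y \<le> 0 \<longrightarrow> cos (pi*y) - cos (pi*w) \<ge> (pi*kk2/2) * (y + w)"
  proof (intro allI impI)
    fix y assume y: "-w < y" "y \<le> 0"
    have py: "-(pi*w) < pi*y" "pi*y \<le> 0"
    proof -
      have "pi*(-w) < pi*y" using y by (intro mult_strict_left_mono) auto
      thus "-(pi*w) < pi*y" by simp
      show "pi*y \<le> 0" using y by (intro mult_nonneg_nonpos) auto
    qed
    have e: "cos (pi*y) - cos (pi*w) = 2 * sin ((pi*y + pi*w)/2) * sin ((pi*w - pi*y)/2)"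
      by (rule cos_diff_cos)
    define th where "th = (pi*w - pi*y)/2"
    have th1: "pi*w/2 \<le> th" unfolding th_def add_divide_distrib diff_divide_distrib using py pw0 by linarith
    have th2: "pi - pi*w \<le> pi - th" unfolding th_def add_divide_distrib diff_divide_distrib using py pw0 by linarith
    have th3: "0 \<le> th" unfolding th_def add_divide_distrib diff_divide_distrib using py pw0 by linarith
    have th4: "th \<le> pi" unfolding th_def add_divide_distrib diff_divide_distrib using py pw0 by linarith
    note th = th1 th2 th3 th4
    have mn: "min (pi*w/2) (pi - pi*w) \<le> min th (pi - th)" using th(1,2) by (rule min.mono)
    have A: "kk2 \<le> sin th"
    proof -
      have "kk2 \<le> min th (pi - th) / 2" unfolding kk2_def using mn by (rule divide_right_mono) simp
      thus ?thesis using sin_lb[OF th(3,4)] by linarith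
    qed
    have B: "(pi*y + pi*w)/2 / 2 \<le> sin ((pi*y + pi*w)/2)"
    proof -
      have "0 \<le> (pi*y + pi*w)/2" using py pw0 unfolding add_divide_distrib by linarith
      moreover have "(pi*y + pi*w)/2 \<le> pi/2" using py pw0 unfolding add_divide_distrib by linarith
      ultimately show ?thesis by (rule sin_ge_half)
    qed
    have ineq: "2 * ((pi*y + pi*w)/2 / 2) * kk2 \<le> 2 * sin ((pi*y + pi*w)/2) * sin th"
      using A B kk2p py by (intro mult_mono) (auto simp del: mult_less_cancel_left_pos)
    have eqn: "(pi*kk2/2) * (y + w) = 2 * ((pi*y + pi*w)/2 / 2) * kk2" by (simp add: field_simps)
    have "(pi*kk2/2) * (y + w) \<le> 2 * sin ((pi*y + pi*w)/2) * sin th" unfolding eqn by (rule ineq)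
    thus "cos (pi*y) - cos (pi*w) \<ge> (pi*kk2/2) * (y + w)" unfolding e th_def .
  qed
  moreover have "pi*kk2/2 > 0" using kk2p by auto
  ultimately show ?thesis by blast
qed

definition Ub :: "real \<Rightarrow> real" where "Ub \<beta> = 1/2 - \<beta>/pi^2"

definition qf :: "real \<Rightarrow> real \<Rightarrow> real \<Rightarrow> real \<Rightarrow> real" where
  "qf \<alpha> \<beta> c y = \<alpha>^2 - pi^2 - pi^2 * (c - Ub \<beta>) / (sinus_flow y - c)"

lemma q_bound:
  assumes k: "k > 0" and w: "0 < w" "w \<le> 2" and U: "\<bar>sinus_flow y - c\<bar> \<ge> k * w"
  shows "\<bar>qf \<alpha> \<beta> c y\<bar> \<le> (2 * \<bar>\<alpha>^2 - pi^2\<bar> + pi^2 * \<bar>c - Ub \<beta>\<bar> / k) / w"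
proof -
  define A where "A = \<bar>\<alpha>^2 - pi^2\<bar>"
  define d where "d = \<bar>c - Ub \<beta>\<bar>"
  have kw: "k * w > 0" using k w by simp
  have t1: "\<bar>qf \<alpha> \<beta> c y\<bar> \<le> A + \<bar>pi^2 * (c - Ub \<beta>) / (sinus_flow y - c)\<bar>"
    unfolding qf_def A_def by (rule abs_triangle_ineq4)
  have t2: "\<bar>pi^2 * (c - Ub \<beta>) / (sinus_flow y - c)\<bar> = pi^2 * d / \<bar>sinus_flow y - c\<bar>"
    unfolding d_def by (simp add: abs_mult abs_divide)
  have t3: "pi^2 * d / \<bar>sinus_flow y - c\<bar> \<le> pi^2 * d / (k * w)"
    using U kw unfolding d_def by (intro divide_left_mono) auto
  have "A * w \<le> A * 2" using w unfolding A_def by (intro mult_left_mono) auto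
  hence t4: "A \<le> 2 * A / w" using w by (simp add: field_simps)
  have t5: "pi^2 * d / (k * w) = (pi^2 * d / k) / w" by simp
  have "\<bar>qf \<alpha> \<beta> c y\<bar> \<le> 2 * A / w + (pi^2 * d / k) / w" using t1 t2 t3 t4 t5 by linarith
  thus ?thesis unfolding A_def d_def by (simp add: add_divide_distrib)
qed

lemma q_sing:
  assumes dp: "\<delta> > 0" and d0: "c \<noteq> Ub \<beta>" and e: "e = 1 \<or> e = -1"
    and U: "\<And>y. z < y \<Longrightarrow> y < z + \<delta> \<Longrightarrow> 0 < e * (sinus_flow y - c) \<and> e * (sinus_flow y - c) \<le> pi/2 * (y - z)"
  shows "\<exists>\<delta>' s m. \<delta>' > 0 \<and> \<delta>' \<le> \<delta> \<and> m > 0 \<and> (\<forall>y. z < y \<longrightarrow> y < z + \<delta>' \<longrightarrow> s * qf \<alpha> \<beta> c y \<ge> m / (y - z))"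
proof -
  define d where "d = c - Ub \<beta>"
  have dn: "d \<noteq> 0" using d0 unfolding d_def by simp
  define A where "A = \<bar>\<alpha>^2 - pi^2\<bar>"
  define s where "s = - e * sgn d"
  define \<delta>' where "\<delta>' = min \<delta> (pi * \<bar>d\<bar> / (A + 1))"
  have A0: "A \<ge> 0" unfolding A_def by simp
  have dp': "\<delta>' > 0" "\<delta>' \<le> \<delta>" unfolding \<delta>'_def using dp dn A0 by auto
  have m0: "pi * \<bar>d\<bar> > 0" using dn by simp
  have main: "s * qf \<alpha> \<beta> c y \<ge> pi * \<bar>d\<bar> / (y - z)" if y: "z < y" "y < z + \<delta>'" for y
  proof -
    define V where "V = e * (sinus_flow y - c)"
    have V: "0 < V" "V \<le> pi/2 * (y - z)" using U[of y] y dp' unfolding V_def by auto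
    have yz: "y - z > 0" using y by simp
    have e2: "e * e = 1" using e by auto
    have sd: "sgn d * d = \<bar>d\<bar>" using dn by (cases "d > 0") auto
    have s2: "\<bar>s\<bar> = 1" unfolding s_def using e dn by (auto simp: abs_mult)
    have Un: "sinus_flow y - c \<noteq> 0" using V(1) unfolding V_def by auto
    define X where "X = sinus_flow y - c"
    have XV: "V = e * X" unfolding V_def X_def ..
    have q1: "s * qf \<alpha> \<beta> c y = s * (\<alpha>^2 - pi^2) - s * (pi^2 * d / X)"
      unfolding qf_def d_def X_def by (simp add: right_diff_distrib)
    have k1: "sgn d * (pi^2 * d / X) = pi^2 * (sgn d * d) / X" by (simp add: algebra_simps)
    also have "\<dots> = pi^2 * \<bar>d\<bar> / X" by (simp only: sd)
    finally have k1': "sgn d * (pi^2 * d / X) = pi^2 * \<bar>d\<bar> / X" .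
    have q2: "- s * (pi^2 * d / X) = pi^2 * \<bar>d\<bar> / V"
    proof (cases "e = 1")
      case True
      hence "s = - sgn d" "V = X" unfolding s_def XV by auto
      thus ?thesis using k1' by simp
    next
      case False
      hence "e = -1" using e by auto
      hence "s = sgn d" "V = - X" unfolding s_def XV by auto
      thus ?thesis using k1' by simp
    qed
    have eq: "s * qf \<alpha> \<beta> c y = s * (\<alpha>^2 - pi^2) + pi^2 * \<bar>d\<bar> / V"
      using q1 q2 by simp
    have i1: "s * (\<alpha>^2 - pi^2) \<ge> - A"
    proof -
      have "\<bar>s * (\<alpha>^2 - pi^2)\<bar> = A" unfolding A_def using s2 by (simp add: abs_mult)
      thus ?thesis by (metis abs_ge_minus_self minus_le_iff)
    qed
    have i2: "pi^2 * \<bar>d\<bar> / V \<ge> pi^2 * \<bar>d\<bar> / (pi/2 * (y - z))"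
      using V m0 yz by (intro divide_left_mono) auto
    have i3: "pi^2 * \<bar>d\<bar> / (pi/2 * (y - z)) = 2 * (pi * \<bar>d\<bar> / (y - z))"
      using yz by (simp add: field_simps power2_eq_square)
    have "y - z < pi * \<bar>d\<bar> / (A + 1)" using y unfolding \<delta>'_def by auto
    hence "(y - z) * (A + 1) < pi * \<bar>d\<bar>" using A0 by (simp add: field_simps)
    hence "A + 1 < pi * \<bar>d\<bar> / (y - z)" using yz by (simp add: field_simps)
    thus ?thesis using eq i1 i2 i3 by linarith
  qed
  show ?thesis using dp' m0 main by blast
qed

lemma u1_zero:
  fixes u v :: "real \<Rightarrow> real"
  assumes "DERIV u y :> v y" "a < y" "y < b" "\<And>x. a < x \<Longrightarrow> x < b \<Longrightarrow> u x = 0"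
  shows "v y = 0"
proof -
  have "DERIV (\<lambda>_. 0::real) y :> v y"
    by (rule has_field_derivative_transform_within_open[OF assms(1), of "{a<..<b}"]) (use assms in auto)
  thus ?thesis using DERIV_const DERIV_unique by blast
qed

lemma prop_right:
  fixes u v :: "real \<Rightarrow> real"
  assumes zb: "z < b" "-1 \<le> z" "b \<le> 1"
    and cu: "continuous_on {z..b} u" and cv: "continuous_on {z..b} v"
    and du: "\<And>y. z < y \<Longrightarrow> y < b \<Longrightarrow> DERIV u y :> v y"
    and dv: "\<And>y. z < y \<Longrightarrow> y < b \<Longrightarrow> DERIV v y :> qf \<alpha> \<beta> c y * u y"
    and k: "k > 0" and lb: "\<And>y. z < y \<Longrightarrow> y < b \<Longrightarrow> \<bar>sinus_flow y - c\<bar> \<ge> k * (y - z)"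
    and uz: "u z = 0" and vz: "v z = 0"
  shows "\<forall>y\<in>{z..b}. u y = 0"
proof -
  define M where "M = 2 * \<bar>\<alpha>^2 - pi^2\<bar> + pi^2 * \<bar>c - Ub \<beta>\<bar> / k + 1"
  have M: "M > 0" unfolding M_def using k by (simp add: add_nonneg_pos)
  show ?thesis
  proof (rule zero_prop[where g="\<lambda>y. qf \<alpha> \<beta> c y * u y" and M=M, OF zb(1) cu cv du dv _ M uz vz])
    fix y assume y: "z < y" "y < b"
    have "\<bar>qf \<alpha> \<beta> c y\<bar> \<le> (2 * \<bar>\<alpha>^2 - pi^2\<bar> + pi^2 * \<bar>c - Ub \<beta>\<bar> / k) / (y - z)"
      by (rule q_bound[OF k _ _ lb[OF y]]) (use y zb in auto)
    also have "\<dots> \<le> M / (y - z)" unfolding M_def using y by (intro divide_right_mono) auto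
    finally have "\<bar>qf \<alpha> \<beta> c y\<bar> * \<bar>u y\<bar> \<le> M / (y - z) * \<bar>u y\<bar>" by (intro mult_right_mono) auto
    thus "\<bar>qf \<alpha> \<beta> c y * u y\<bar> \<le> M * \<bar>u y\<bar> / (y - z)" by (simp add: abs_mult)
  qed
qed

lemma prop_left:
  fixes u v :: "real \<Rightarrow> real"
  assumes zb: "a < z" "-1 \<le> a" "z \<le> 1"
    and cu: "continuous_on {a..z} u" and cv: "continuous_on {a..z} v"
    and du: "\<And>y. a < y \<Longrightarrow> y < z \<Longrightarrow> DERIV u y :> v y"
    and dv: "\<And>y. a < y \<Longrightarrow> y < z \<Longrightarrow> DERIV v y :> qf \<alpha> \<beta> c y * u y"
    and k: "k > 0" and lb: "\<And>y. a < y \<Longrightarrow> y < z \<Longrightarrow> \<bar>sinus_flow y - c\<bar> \<ge> k * (z - y)"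
    and uz: "u z = 0" and vz: "v z = 0"
  shows "\<forall>y\<in>{a..z}. u y = 0"
proof -
  define M where "M = 2 * \<bar>\<alpha>^2 - pi^2\<bar> + pi^2 * \<bar>c - Ub \<beta>\<bar> / k + 1"
  have M: "M > 0" unfolding M_def using k by (simp add: add_nonneg_pos)
  show ?thesis
  proof (rule zero_prop_left[where g="\<lambda>y. qf \<alpha> \<beta> c y * u y" and M=M, OF zb(1) cu cv du dv _ M uz vz])
    fix y assume y: "a < y" "y < z"
    have "\<bar>qf \<alpha> \<beta> c y\<bar> \<le> (2 * \<bar>\<alpha>^2 - pi^2\<bar> + pi^2 * \<bar>c - Ub \<beta>\<bar> / k) / (z - y)"
      by (rule q_bound[OF k _ _ lb[OF y]]) (use y zb in auto)
    also have "\<dots> \<le> M / (z - y)" unfolding M_def using y by (intro divide_right_mono) auto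
    finally have "\<bar>qf \<alpha> \<beta> c y\<bar> * \<bar>u y\<bar> \<le> M / (z - y) * \<bar>u y\<bar>" by (intro mult_right_mono) auto
    thus "\<bar>qf \<alpha> \<beta> c y * u y\<bar> \<le> M * \<bar>u y\<bar> / (z - y)" by (simp add: abs_mult)
  qed
qed

lemma real_core:
  fixes u v :: "real \<Rightarrow> real" and \<alpha> \<beta> c :: real
  assumes al: "3*pi^2/4 \<le> \<alpha>^2" and be: "-(pi^2/2) \<le> \<beta>" "\<beta> \<le> pi^2/2"
    and cu: "continuous_on {-1..1} u" and cv: "continuous_on {-1..1} v"
    and du: "\<And>y. -1 < y \<Longrightarrow> y < 1 \<Longrightarrow> DERIV u y :> v y"
    and dv: "\<And>s t y. -1 \<le> s \<Longrightarrow> t \<le> 1 \<Longrightarrow> (c = Ub \<beta> \<or> (\<forall>x. s < x \<longrightarrow> x < t \<longrightarrow> sinus_flow x \<noteq> c))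
              \<Longrightarrow> s < y \<Longrightarrow> y < t \<Longrightarrow> DERIV v y :> qf \<alpha> \<beta> c y * u y"
    and um: "u (-1) = 0" and up: "u 1 = 0"
  shows "(c \<noteq> Ub \<beta> \<or> \<alpha>^2 > 3*pi^2/4 \<longrightarrow> (\<forall>y\<in>{-1..1}. u y = 0))
       \<and> (c = Ub \<beta> \<longrightarrow> \<alpha>^2 = 3*pi^2/4 \<longrightarrow> (\<exists>k. \<forall>y\<in>{-1..1}. u y = k * cos (pi*y/2)))"
proof -
  have Ub01: "0 \<le> Ub \<beta>" "Ub \<beta> \<le> 1"
  proof -
    have "\<beta> / pi^2 \<le> 1/2" "-(1/2) \<le> \<beta> / pi^2" using be by (simp_all add: field_simps)
    thus "0 \<le> Ub \<beta>" "Ub \<beta> \<le> 1" unfolding Ub_def by linarith+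
  qed
  have "continuous_on {-1..1} (\<lambda>y. \<bar>v y\<bar>)" using cv by (intro continuous_intros)
  then obtain y0 where y0: "\<forall>y\<in>{-1..1}. \<bar>v y\<bar> \<le> \<bar>v y0\<bar>"
    using continuous_attains_sup[of "{-1..1::real}" "\<lambda>y. \<bar>v y\<bar>"] by auto
  define S where "S = \<bar>v y0\<bar>"
  have vS: "\<And>y. -1 \<le> y \<Longrightarrow> y \<le> 1 \<Longrightarrow> \<bar>v y\<bar> \<le> S" using y0 unfolding S_def by auto
  have ST: "(\<exists>k. \<forall>y\<in>{a<..<b}. u y = k * cos (pi*y/2)) \<and> (\<forall>y\<in>{a<..<b}. (qf \<alpha> \<beta> c y + pi^2/4) * (u y)^2 = 0)"
    if ab: "-1 \<le> a" "a < b" "b \<le> 1" and uab: "u a = 0" "u b = 0"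
       and reg: "c = Ub \<beta> \<or> (\<forall>x. a < x \<longrightarrow> x < b \<longrightarrow> sinus_flow x \<noteq> c)"
       and qg: "\<And>y. a < y \<Longrightarrow> y < b \<Longrightarrow> -(pi^2/4) \<le> qf \<alpha> \<beta> c y" for a b
  proof (rule sturm[where v = v and S = S])
    show "a < b" "-1 \<le> a" "b \<le> 1" using ab by auto
    show "continuous_on {a..b} u" using continuous_on_subset[OF cu] ab by auto
    show "DERIV u y :> v y" if "a < y" "y < b" for y using du that ab by auto
    show "DERIV v y :> qf \<alpha> \<beta> c y * u y" if "a < y" "y < b" for y using dv[OF ab(1) ab(3) reg] that by auto
    show "\<bar>v y\<bar> \<le> S" if "a < y" "y < b" for y using vS that ab by auto
    show "-(pi^2/4) \<le> qf \<alpha> \<beta> c y" if "a < y" "y < b" for y using qg that by auto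
    show "u a = 0" "u b = 0" using uab by auto
  qed
  have ZR: "\<forall>y\<in>{a..b}. u y = 0"
    if ab: "-1 \<le> a" "a < b" "b \<le> 1" and uab: "u a = 0" "u b = 0"
       and reg: "c = Ub \<beta> \<or> (\<forall>x. a < x \<longrightarrow> x < b \<longrightarrow> sinus_flow x \<noteq> c)"
       and qg: "\<And>y. a < y \<Longrightarrow> y < b \<Longrightarrow> -(pi^2/4) < qf \<alpha> \<beta> c y" for a b
  proof
    fix y assume y: "y \<in> {a..b}"
    show "u y = 0"
    proof (cases "y = a \<or> y = b")
      case True thus ?thesis using uab by auto
    next
      case False
      hence y': "a < y" "y < b" using y by auto
      have "(qf \<alpha> \<beta> c y + pi^2/4) * (u y)^2 = 0"
        using ST[OF ab uab reg, OF less_imp_le[OF qg]] y' by auto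
      moreover have "qf \<alpha> \<beta> c y + pi^2/4 > 0" using qg[OF y'] by simp
      ultimately show ?thesis by simp
    qed
  qed
  have qneg: "-(pi^2/4) < qf \<alpha> \<beta> c y" if "(c - Ub \<beta>) / (sinus_flow y - c) < 0" for y
  proof -
    have "pi^2 * ((c - Ub \<beta>) / (sinus_flow y - c)) < 0" by (rule mult_pos_neg) (use that in auto)
    hence "pi^2 * (c - Ub \<beta>) / (sinus_flow y - c) < 0" by (simp only: times_divide_eq_right)
    thus ?thesis unfolding qf_def using al by linarith
  qed
  show ?thesis
  proof (cases "c = Ub \<beta>")
    case True
    have qc: "qf \<alpha> \<beta> c y = \<alpha>^2 - pi^2" for y unfolding qf_def True by simp
    have st: "(\<exists>k. \<forall>y\<in>{-1<..<1}. u y = k * cos (pi*y/2)) \<and> (\<forall>y\<in>{-1<..<1}. (qf \<alpha> \<beta> c y + pi^2/4) * (u y)^2 = 0)"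
      by (rule ST) (use um up True qc al in auto)
    then obtain k where k: "\<forall>y\<in>{-1<..<1}. u y = k * cos (pi*y/2)"
      and z: "\<forall>y\<in>{-1<..<1}. (\<alpha>^2 - pi^2 + pi^2/4) * (u y)^2 = 0" unfolding qc by blast
    show ?thesis
    proof (intro conjI impI)
      assume "c \<noteq> Ub \<beta> \<or> 3*pi^2/4 < \<alpha>^2"
      hence a: "3*pi^2/4 < \<alpha>^2" using True by auto
      show "\<forall>y\<in>{-1..1}. u y = 0"
      proof
        fix y :: real assume y: "y \<in> {-1..1}"
        show "u y = 0"
        proof (cases "y = -1 \<or> y = 1")
          case True thus ?thesis using um up by auto
        next
          case False
          hence "y \<in> {-1<..<1}" using y by auto
          hence "(\<alpha>^2 - pi^2 + pi^2/4) * (u y)^2 = 0" using z by auto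
          moreover have "\<alpha>^2 - pi^2 + pi^2/4 > 0" using a by simp
          ultimately show ?thesis by simp
        qed
      qed
    next
      assume "c = Ub \<beta>" "\<alpha>^2 = 3*pi^2/4"
      show "\<exists>k. \<forall>y\<in>{-1..1}. u y = k * cos (pi*y/2)"
      proof (intro exI ballI)
        fix y :: real assume y: "y \<in> {-1..1}"
        show "u y = k * cos (pi*y/2)"
        proof (cases "y = -1 \<or> y = 1")
          case True thus ?thesis using um up by auto
        next
          case False thus ?thesis using k y by auto
        qed
      qed
    qed
  next
    case False
    define d where "d = c - Ub \<beta>"
    have dn: "d \<noteq> 0" using False unfolding d_def by simp
    have all0: "\<forall>y\<in>{-1..1}. u y = 0"
    proof (cases "c \<le> 0 \<or> 1 < c")
      case True
      have H: "sinus_flow x \<noteq> c \<and> (c - Ub \<beta>) / (sinus_flow x - c) < 0" if "-1 < x" "x < 1" for x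
      proof (cases "c \<le> 0")
        case True
        have "sinus_flow x > 0" using U_pos that by auto
        moreover have "c - Ub \<beta> < 0" using True Ub01 dn unfolding d_def by auto
        ultimately show ?thesis using True by (auto intro: divide_neg_pos)
      next
        case False
        hence c1: "1 < c" using \<open>c \<le> 0 \<or> 1 < c\<close> by auto
        have "sinus_flow x \<le> 1" by (rule U_le1)
        moreover have "c - Ub \<beta> > 0" using c1 Ub01 by auto
        ultimately show ?thesis using c1 by (auto intro: divide_pos_neg)
      qed
      show ?thesis by (rule ZR) (use um up H qneg in auto)
    next
      case False
      hence c01: "0 < c" "c \<le> 1" by auto
      show ?thesis
      proof (cases "c = 1")
        case True
        have d0: "c - Ub \<beta> > 0" using True Ub01 dn unfolding d_def by auto
        have U0: "sinus_flow 0 = 1" unfolding sinus_flow_def by simp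
        have Ulow: "sinus_flow x < c" if "x \<noteq> 0" "-1 < x" "x < 1" for x
          using U_lt1[of x] that True by auto
        have u0: "u 0 = 0"
        proof -
          have "\<exists>\<delta>' s m. \<delta>' > 0 \<and> \<delta>' \<le> 1 \<and> m > 0 \<and> (\<forall>y. 0 < y \<longrightarrow> y < 0 + \<delta>' \<longrightarrow> s * qf \<alpha> \<beta> c y \<ge> m / (y - 0))"
          proof (rule q_sing[where e = "-1"])
            fix y :: real assume y: "0 < y" "y < 0 + 1"
            have "0 < -1 * (sinus_flow y - c)" using Ulow[of y] y by auto
            moreover have "-1 * (sinus_flow y - c) \<le> pi/2 * (y - 0)"
              using U_lip[of y 0] U0 True y abs_ge_minus_self[of "sinus_flow y - c"] by auto
            ultimately show "0 < -1 * (sinus_flow y - c) \<and> -1 * (sinus_flow y - c) \<le> pi/2 * (y - 0)" by blast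
          qed (use \<open>c \<noteq> Ub \<beta>\<close> in auto)
          then obtain \<delta>' s m where dm: "\<delta>' > 0" "\<delta>' \<le> 1" "m > 0"
            "\<forall>y. 0 < y \<longrightarrow> y < 0 + \<delta>' \<longrightarrow> s * qf \<alpha> \<beta> c y \<ge> m / (y - 0)" by blast
          show ?thesis
          proof (rule zero_at_sing[where u = u and z = 0 and q = "qf \<alpha> \<beta> c" and v = v and s = s and m = m, OF dm(1)])
            show "continuous_on {0..0+\<delta>'} u" using continuous_on_subset[OF cu] dm by auto
            show "continuous_on {0..0+\<delta>'} v" using continuous_on_subset[OF cv] dm by auto
            show "DERIV v y :> qf \<alpha> \<beta> c y * u y" if "0 < y" "y < 0 + \<delta>'" for y
            proof (rule dv[of 0 1])
              show "c = Ub \<beta> \<or> (\<forall>x. 0 < x \<longrightarrow> x < 1 \<longrightarrow> sinus_flow x \<noteq> c)"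
              proof (intro disjI2 allI impI)
                fix x :: real assume "0 < x" "x < 1"
                thus "sinus_flow x \<noteq> c" using Ulow[of x] by auto
              qed
            qed (use that dm in auto)
            show "m / (y - 0) \<le> s * qf \<alpha> \<beta> c y" if "0 < y" "y < 0 + \<delta>'" for y
              using dm(4) that by auto
          qed (use dm in auto)
        qed
        have L: "\<forall>y\<in>{-1..0}. u y = 0"
        proof (rule ZR)
          show "c = Ub \<beta> \<or> (\<forall>x. -1 < x \<longrightarrow> x < 0 \<longrightarrow> sinus_flow x \<noteq> c)"
          proof (intro disjI2 allI impI)
            fix x :: real assume "-1 < x" "x < 0"
            thus "sinus_flow x \<noteq> c" using Ulow[of x] by auto
          qed
          show "-(pi^2/4) < qf \<alpha> \<beta> c y" if "-1 < y" "y < 0" for y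
            using that Ulow[of y] d0 by (intro qneg divide_pos_neg) auto
        qed (use um u0 in auto)
        have R: "\<forall>y\<in>{0..1}. u y = 0"
        proof (rule ZR)
          show "c = Ub \<beta> \<or> (\<forall>x. 0 < x \<longrightarrow> x < 1 \<longrightarrow> sinus_flow x \<noteq> c)"
          proof (intro disjI2 allI impI)
            fix x :: real assume "0 < x" "x < 1"
            thus "sinus_flow x \<noteq> c" using Ulow[of x] by auto
          qed
          show "-(pi^2/4) < qf \<alpha> \<beta> c y" if "0 < y" "y < 1" for y
            using that Ulow[of y] d0 by (intro qneg divide_pos_neg) auto
        qed (use up u0 in auto)
        show ?thesis
        proof
          fix y :: real assume y: "y \<in> {-1..1}"
          show "u y = 0"
          proof (cases "y \<le> 0")
            case True thus ?thesis using L y by auto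
          next
            case False thus ?thesis using R y by auto
          qed
        qed
      next
        case False
        hence c01: "0 < c" "c < 1" using c01 by auto
        define w where "w = yc c"
        note yp = yc_props[OF c01, folded w_def]
        have w01: "0 < w" "w < 1" using yp by auto
        have Uw: "sinus_flow w = c" "sinus_flow (-w) = c" using yp by auto
        have Ugt: "sinus_flow x > c" if "\<bar>x\<bar> < w" for x using yp(5)[of x] that w01 by auto
        have Ult: "sinus_flow x < c" if "w < \<bar>x\<bar>" "\<bar>x\<bar> \<le> 1" for x using yp(6)[of x] that by auto
        have UltR: "sinus_flow x < c" if "w < x" "x \<le> 1" for x
          using Ult[of x] that w01 by auto
        have UltL: "sinus_flow x < c" if "-1 \<le> x" "x < -w" for x
          using Ult[of x] that w01 by auto
        have UgtM: "sinus_flow x > c" if "-w < x" "x < w" for x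
          using Ugt[of x] that by auto
        have Ucos: "sinus_flow y - c = (cos (pi*y) - cos (pi*w))/2" for y
          using Uw(1) unfolding sinus_flow_def by (simp add: field_simps)
        have uw: "u w = 0"
        proof -
          have "\<exists>\<delta>' s m. \<delta>' > 0 \<and> \<delta>' \<le> 1 - w \<and> m > 0 \<and> (\<forall>y. w < y \<longrightarrow> y < w + \<delta>' \<longrightarrow> s * qf \<alpha> \<beta> c y \<ge> m / (y - w))"
          proof (rule q_sing[where e = "-1"])
            fix y :: real assume y: "w < y" "y < w + (1 - w)"
            have "0 < -1 * (sinus_flow y - c)" using Ult[of y] y w01 by auto
            moreover have "-1 * (sinus_flow y - c) \<le> pi/2 * (y - w)"
              using U_lip[of y w] Uw y abs_ge_minus_self[of "sinus_flow y - c"] by auto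
            ultimately show "0 < -1 * (sinus_flow y - c) \<and> -1 * (sinus_flow y - c) \<le> pi/2 * (y - w)" by blast
          qed (use \<open>c \<noteq> Ub \<beta>\<close> w01 in auto)
          then obtain \<delta>' s m where dm: "\<delta>' > 0" "\<delta>' \<le> 1 - w" "m > 0"
            "\<forall>y. w < y \<longrightarrow> y < w + \<delta>' \<longrightarrow> s * qf \<alpha> \<beta> c y \<ge> m / (y - w)" by blast
          show ?thesis
          proof (rule zero_at_sing[where u = u and z = w and q = "qf \<alpha> \<beta> c" and v = v and s = s and m = m, OF dm(1)])
            show "continuous_on {w..w+\<delta>'} u" using continuous_on_subset[OF cu] dm w01 by auto
            show "continuous_on {w..w+\<delta>'} v" using continuous_on_subset[OF cv] dm w01 by auto
            show "DERIV v y :> qf \<alpha> \<beta> c y * u y" if "w < y" "y < w + \<delta>'" for y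
            proof (rule dv[of w 1])
              show "c = Ub \<beta> \<or> (\<forall>x. w < x \<longrightarrow> x < 1 \<longrightarrow> sinus_flow x \<noteq> c)"
              proof (intro disjI2 allI impI)
                fix x assume "w < x" "x < 1"
                thus "sinus_flow x \<noteq> c" using UltR[of x] by auto
              qed
            qed (use that dm w01 in auto)
            show "m / (y - w) \<le> s * qf \<alpha> \<beta> c y" if "w < y" "y < w + \<delta>'" for y
              using dm(4) that by auto
          qed (use dm in auto)
        qed
        have umw: "u (-w) = 0"
        proof -
          have "\<exists>\<delta>' s m. \<delta>' > 0 \<and> \<delta>' \<le> w \<and> m > 0 \<and> (\<forall>y. -w < y \<longrightarrow> y < -w + \<delta>' \<longrightarrow> s * qf \<alpha> \<beta> c y \<ge> m / (y - -w))"
          proof (rule q_sing[where e = "1"])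
            fix y :: real assume y: "-w < y" "y < -w + w"
            have "0 < 1 * (sinus_flow y - c)" using Ugt[of y] y w01 by auto
            moreover have "1 * (sinus_flow y - c) \<le> pi/2 * (y - -w)"
              using U_lip[of y "-w"] Uw y abs_ge_self[of "sinus_flow y - c"] by auto
            ultimately show "0 < 1 * (sinus_flow y - c) \<and> 1 * (sinus_flow y - c) \<le> pi/2 * (y - -w)" by blast
          qed (use \<open>c \<noteq> Ub \<beta>\<close> w01 in auto)
          then obtain \<delta>' s m where dm: "\<delta>' > 0" "\<delta>' \<le> w" "m > 0"
            "\<forall>y. -w < y \<longrightarrow> y < -w + \<delta>' \<longrightarrow> s * qf \<alpha> \<beta> c y \<ge> m / (y - -w)" by blast
          show ?thesis
          proof (rule zero_at_sing[where u = u and z = "-w" and q = "qf \<alpha> \<beta> c" and v = v and s = s and m = m, OF dm(1)])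
            show "continuous_on {-w..-w+\<delta>'} u" using continuous_on_subset[OF cu] dm w01 by auto
            show "continuous_on {-w..-w+\<delta>'} v" using continuous_on_subset[OF cv] dm w01 by auto
            show "DERIV v y :> qf \<alpha> \<beta> c y * u y" if "-w < y" "y < -w + \<delta>'" for y
            proof (rule dv[of "-w" 0])
              show "c = Ub \<beta> \<or> (\<forall>x. -w < x \<longrightarrow> x < 0 \<longrightarrow> sinus_flow x \<noteq> c)"
              proof (intro disjI2 allI impI)
                fix x assume "-w < x" "x < 0"
                thus "sinus_flow x \<noteq> c" using UgtM[of x] by auto
              qed
            qed (use that dm w01 in auto)
            show "m / (y - -w) \<le> s * qf \<alpha> \<beta> c y" if "-w < y" "y < -w + \<delta>'" for y
              using dm(4) that by auto
          qed (use dm in auto)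
        qed
        obtain k1 where k1: "k1 > 0" "\<forall>y. w < y \<longrightarrow> y < 1 \<longrightarrow> cos (pi*w) - cos (pi*y) \<ge> k1 * (y - w)"
          using LB_out[OF w01] by blast
        obtain k2 where k2: "k2 > 0" "\<forall>y. -w < y \<longrightarrow> y \<le> 0 \<longrightarrow> cos (pi*y) - cos (pi*w) \<ge> k2 * (y + w)"
          using LB_mid[OF w01] by blast
        have lbo: "\<bar>sinus_flow y - c\<bar> \<ge> (k1/2) * (\<bar>y\<bar> - w)" if "w < \<bar>y\<bar>" "\<bar>y\<bar> < 1" for y
        proof -
          have A: "cos (pi*w) - cos (pi*\<bar>y\<bar>) \<ge> k1 * (\<bar>y\<bar> - w)" using k1(2) that by blast
          have e: "sinus_flow y - c = (cos (pi*\<bar>y\<bar>) - cos (pi*w))/2" using Ucos[of y] cos_abs_pi[of y] by simp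
          have "(k1/2) * (\<bar>y\<bar> - w) = (k1 * (\<bar>y\<bar> - w))/2" by simp
          also have "\<dots> \<le> (cos (pi*w) - cos (pi*\<bar>y\<bar>))/2" using A by (rule divide_right_mono) simp
          also have "\<dots> = -(sinus_flow y - c)" unfolding e by (simp add: field_simps)
          also have "\<dots> \<le> \<bar>sinus_flow y - c\<bar>" by (rule abs_ge_minus_self)
          finally show ?thesis .
        qed
        have lbm: "\<bar>sinus_flow y - c\<bar> \<ge> (k2/2) * (w - \<bar>y\<bar>)" if "\<bar>y\<bar> < w" for y
        proof -
          have "-w < -\<bar>y\<bar>" "-\<bar>y\<bar> \<le> 0" using that by auto
          hence A: "cos (pi*(-\<bar>y\<bar>)) - cos (pi*w) \<ge> k2 * (-\<bar>y\<bar> + w)" using k2(2) by blast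
          have e: "sinus_flow y - c = (cos (pi*(-\<bar>y\<bar>)) - cos (pi*w))/2" using Ucos[of y] cos_abs_pi[of y] by simp
          have "(k2/2) * (w - \<bar>y\<bar>) = (k2 * (-\<bar>y\<bar> + w))/2" by (simp add: algebra_simps)
          also have "\<dots> \<le> (cos (pi*(-\<bar>y\<bar>)) - cos (pi*w))/2" using A by (rule divide_right_mono) simp
          also have "\<dots> = sinus_flow y - c" unfolding e by simp
          also have "\<dots> \<le> \<bar>sinus_flow y - c\<bar>" by (rule abs_ge_self)
          finally show ?thesis .
        qed
        show ?thesis
        proof (cases "d < 0")
          case True
          have dneg: "c - Ub \<beta> < 0" using True unfolding d_def .
          have M0: "\<forall>y\<in>{-w..w}. u y = 0"
          proof (rule ZR)
            show "c = Ub \<beta> \<or> (\<forall>x. -w < x \<longrightarrow> x < w \<longrightarrow> sinus_flow x \<noteq> c)"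
            proof (intro disjI2 allI impI)
              fix x :: real assume "-w < x" "x < w"
              thus "sinus_flow x \<noteq> c" using UgtM[of x] w01 by auto
            qed
            show "-(pi^2/4) < qf \<alpha> \<beta> c y" if "-w < y" "y < w" for y
              using that Ugt[of y] dneg by (intro qneg divide_neg_pos) auto
          qed (use umw uw w01 in auto)
          have v0: "v y = 0" if "-w < y" "y < w" for y
            by (rule u1_zero[where a="-w" and b=w, OF du]) (use that w01 M0 in auto)
          have vw: "v (-w) = 0" "v w = 0"
            by (rule zero_closure[of "-w" w v]; use v0 w01 continuous_on_subset[OF cv] in auto)+
          have R: "u y = 0" if "w \<le> y" "y \<le> 1" for y
          proof (cases "y = 1")
            case True thus ?thesis using up by simp
          next
            case False
            define b where "b = (y + 1)/2"
            have b: "y < b" "b < 1" unfolding b_def using that False by auto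
            have "\<forall>y\<in>{w..b}. u y = 0"
            proof (rule prop_right[where k = "k1/2" and v = v])
              show "continuous_on {w..b} u" using continuous_on_subset[OF cu] b w01 by auto
              show "continuous_on {w..b} v" using continuous_on_subset[OF cv] b w01 by auto
              show "DERIV v x :> qf \<alpha> \<beta> c x * u x" if "w < x" "x < b" for x
              proof (rule dv[of w b])
                show "c = Ub \<beta> \<or> (\<forall>x. w < x \<longrightarrow> x < b \<longrightarrow> sinus_flow x \<noteq> c)"
                proof (intro disjI2 allI impI)
                fix x assume "w < x" "x < b"
                thus "sinus_flow x \<noteq> c" using UltR[of x] b by auto
              qed
              qed (use that b w01 in auto)
              show "\<bar>sinus_flow x - c\<bar> \<ge> k1/2 * (x - w)" if "w < x" "x < b" for x
                using lbo[of x] that b w01 by auto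
            qed (use that b w01 uw vw du k1 in auto)
            thus ?thesis using that b by auto
          qed
          have L: "u y = 0" if "-1 \<le> y" "y \<le> -w" for y
          proof (cases "y = -1")
            case True thus ?thesis using um by simp
          next
            case False
            define a where "a = (y - 1)/2"
            have a: "a < y" "-1 < a" unfolding a_def using that False by auto
            have "\<forall>y\<in>{a..-w}. u y = 0"
            proof (rule prop_left[where k = "k1/2" and v = v])
              show "continuous_on {a..-w} u" using continuous_on_subset[OF cu] a w01 by auto
              show "continuous_on {a..-w} v" using continuous_on_subset[OF cv] a w01 by auto
              show "DERIV v x :> qf \<alpha> \<beta> c x * u x" if "a < x" "x < -w" for x
              proof (rule dv[of a "-w"])
                show "c = Ub \<beta> \<or> (\<forall>x. a < x \<longrightarrow> x < -w \<longrightarrow> sinus_flow x \<noteq> c)"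
                proof (intro disjI2 allI impI)
                fix x assume "a < x" "x < -w"
                thus "sinus_flow x \<noteq> c" using UltL[of x] a by auto
              qed
              qed (use that a w01 in auto)
              show "\<bar>sinus_flow x - c\<bar> \<ge> k1/2 * (-w - x)" if "a < x" "x < -w" for x
              proof -
                have "w < \<bar>x\<bar>" "\<bar>x\<bar> < 1" using that a w01 by auto
                hence L: "\<bar>sinus_flow x - c\<bar> \<ge> (k1/2) * (\<bar>x\<bar> - w)" by (rule lbo)
                have eq: "-w - x = \<bar>x\<bar> - w" using that w01 by auto
                show ?thesis unfolding eq using L .
              qed
            qed (use that a w01 umw vw du k1 in auto)
            thus ?thesis using that a by auto
          qed
          show ?thesis
          proof
            fix y :: real assume y: "y \<in> {-1..1}"
            show "u y = 0"
            proof (cases "y \<le> -w")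
              case True thus ?thesis using L y by auto
            next
              case False
              show ?thesis
              proof (cases "y \<ge> w")
                case True thus ?thesis using R y by auto
              next
                case False
                thus ?thesis using M0 y \<open>\<not> y \<le> -w\<close> by auto
              qed
            qed
          qed
        next
          case False
          hence dpos: "c - Ub \<beta> > 0" using dn unfolding d_def by auto
          have R0: "\<forall>y\<in>{w..1}. u y = 0"
          proof (rule ZR)
            show "c = Ub \<beta> \<or> (\<forall>x. w < x \<longrightarrow> x < 1 \<longrightarrow> sinus_flow x \<noteq> c)"
            proof (intro disjI2 allI impI)
              fix x :: real assume "w < x" "x < 1"
              thus "sinus_flow x \<noteq> c" using UltR[of x] w01 by auto
            qed
            show "-(pi^2/4) < qf \<alpha> \<beta> c y" if "w < y" "y < 1" for y
              using that Ult[of y] w01 dpos by (intro qneg divide_pos_neg) auto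
          qed (use up uw w01 in auto)
          have L0: "\<forall>y\<in>{-1..-w}. u y = 0"
          proof (rule ZR)
            show "c = Ub \<beta> \<or> (\<forall>x. -1 < x \<longrightarrow> x < -w \<longrightarrow> sinus_flow x \<noteq> c)"
            proof (intro disjI2 allI impI)
              fix x :: real assume "-1 < x" "x < -w"
              thus "sinus_flow x \<noteq> c" using UltL[of x] w01 by auto
            qed
            show "-(pi^2/4) < qf \<alpha> \<beta> c y" if "-1 < y" "y < -w" for y
              using that Ult[of y] w01 dpos by (intro qneg divide_pos_neg) auto
          qed (use um umw w01 in auto)
          have vR: "v y = 0" if "w < y" "y < 1" for y
            by (rule u1_zero[where a=w and b=1, OF du]) (use that w01 R0 in auto)
          have vL: "v y = 0" if "-1 < y" "y < -w" for y
            by (rule u1_zero[where a="-1" and b="-w", OF du]) (use that w01 L0 in auto)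
          have vw: "v w = 0"
            by (rule zero_closure[of w 1 v]) (use vR w01 continuous_on_subset[OF cv] in auto)
          have vmw: "v (-w) = 0"
            by (rule zero_closure[of "-1" "-w" v]) (use vL w01 continuous_on_subset[OF cv] in auto)
          have M1: "\<forall>y\<in>{-w..0}. u y = 0"
          proof (rule prop_right[where k = "k2/2" and v = v])
            show "continuous_on {-w..0} u" using continuous_on_subset[OF cu] w01 by auto
            show "continuous_on {-w..0} v" using continuous_on_subset[OF cv] w01 by auto
            show "DERIV v x :> qf \<alpha> \<beta> c x * u x" if "-w < x" "x < 0" for x
            proof (rule dv[of "-w" 0])
              show "c = Ub \<beta> \<or> (\<forall>x. -w < x \<longrightarrow> x < 0 \<longrightarrow> sinus_flow x \<noteq> c)"
              proof (intro disjI2 allI impI)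
                fix x assume "-w < x" "x < 0"
                thus "sinus_flow x \<noteq> c" using UgtM[of x] by auto
              qed
            qed (use that w01 in auto)
            show "\<bar>sinus_flow x - c\<bar> \<ge> k2/2 * (x - -w)" if "-w < x" "x < 0" for x
            proof -
              have "\<bar>x\<bar> < w" using that by auto
              hence L: "\<bar>sinus_flow x - c\<bar> \<ge> (k2/2) * (w - \<bar>x\<bar>)" by (rule lbm)
              have eq: "x - -w = w - \<bar>x\<bar>" using that by auto
              show ?thesis unfolding eq using L .
            qed
          qed (use w01 umw vmw du k2 in auto)
          have M2: "\<forall>y\<in>{0..w}. u y = 0"
          proof (rule prop_left[where k = "k2/2" and v = v])
            show "continuous_on {0..w} u" using continuous_on_subset[OF cu] w01 by auto
            show "continuous_on {0..w} v" using continuous_on_subset[OF cv] w01 by auto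
            show "DERIV v x :> qf \<alpha> \<beta> c x * u x" if "0 < x" "x < w" for x
            proof (rule dv[of 0 w])
              show "c = Ub \<beta> \<or> (\<forall>x. 0 < x \<longrightarrow> x < w \<longrightarrow> sinus_flow x \<noteq> c)"
              proof (intro disjI2 allI impI)
                fix x assume "0 < x" "x < w"
                thus "sinus_flow x \<noteq> c" using UgtM[of x] w01 by auto
              qed
            qed (use that w01 in auto)
            show "\<bar>sinus_flow x - c\<bar> \<ge> k2/2 * (w - x)" if "0 < x" "x < w" for x
            proof -
              have "\<bar>x\<bar> < w" using that by auto
              hence L: "\<bar>sinus_flow x - c\<bar> \<ge> (k2/2) * (w - \<bar>x\<bar>)" by (rule lbm)
              have eq: "w - x = w - \<bar>x\<bar>" using that by auto
              show ?thesis unfolding eq using L .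
            qed
          qed (use w01 uw vw du k2 in auto)
          show ?thesis
          proof
            fix y :: real assume y: "y \<in> {-1..1}"
            show "u y = 0"
            proof -
              have "y \<le> -w \<or> (-w \<le> y \<and> y \<le> 0) \<or> (0 \<le> y \<and> y \<le> w) \<or> w \<le> y" by linarith
              thus ?thesis using M1 M2 R0 L0 y by auto
            qed
          qed
        qed
      qed
    qed
    show ?thesis using all0 False by auto
  qed
qed

lemma U_deriv2: "deriv (deriv sinus_flow) y = -(pi^2/2) * cos (pi*y)"
proof -
  have d1: "deriv sinus_flow = (\<lambda>y. -(pi/2) * sin (pi*y))"
  proof
    fix y :: real
    have "DERIV sinus_flow y :> -(pi/2) * sin (pi*y)"
      unfolding sinus_flow_def[abs_def] by (auto intro!: derivative_eq_intros simp: field_simps)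
    thus "deriv sinus_flow y = -(pi/2) * sin (pi*y)" by (rule DERIV_imp_deriv)
  qed
  have "DERIV (\<lambda>y. -(pi/2) * sin (pi*y)) y :> -(pi^2/2) * cos (pi*y)"
    by (auto intro!: derivative_eq_intros simp: power2_eq_square)
  thus ?thesis unfolding d1 by (rule DERIV_imp_deriv)
qed

lemma K_eq:
  assumes "sinus_flow y \<noteq> c"
  shows "\<alpha>^2 - (\<beta> - deriv (deriv sinus_flow) y) / (sinus_flow y - c) = qf \<alpha> \<beta> c y"
proof -
  have e: "\<beta> - deriv (deriv sinus_flow) y = pi^2 * (sinus_flow y - c) + pi^2 * (c - Ub \<beta>)"
    unfolding U_deriv2 Ub_def sinus_flow_def by (simp add: field_simps)
  have X: "sinus_flow y - c \<noteq> 0" using assms by simp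
  show ?thesis unfolding e qf_def using X by (simp add: add_divide_distrib)
qed

lemma Zneg: "negligible {y \<in> {-1<..<1}. sinus_flow y = c}"
proof (rule negligible_subset[of "{yc c, - yc c}"])
  show "negligible {yc c, - yc c}" by auto
  show "{y \<in> {-1<..<1}. sinus_flow y = c} \<subseteq> {yc c, - yc c}"
  proof
    fix y assume y: "y \<in> {y \<in> {-1<..<1}. sinus_flow y = c}"
    hence "cos (pi * \<bar>y\<bar>) = 2*c - 1" unfolding sinus_flow_def using cos_abs_pi[of y] by auto
    moreover have "0 \<le> pi * \<bar>y\<bar>" "pi * \<bar>y\<bar> \<le> pi" using y by (auto simp: mult_le_cancel_left1)
    ultimately have "arccos (2*c - 1) = pi * \<bar>y\<bar>" using arccos_cos by metis
    hence "\<bar>y\<bar> = yc c" unfolding yc_def by simp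
    thus "y \<in> {yc c, - yc c}" by (cases "y \<ge> 0") auto
  qed
qed

lemma Re_Im_deriv:
  assumes "(f has_vector_derivative f') F"
  shows "((\<lambda>x. Re (f x)) has_real_derivative Re f') F" "((\<lambda>x. Im (f x)) has_real_derivative Im f') F"
  using bounded_linear.has_vector_derivative[OF bounded_linear_Re assms]
    bounded_linear.has_vector_derivative[OF bounded_linear_Im assms]
  by (simp_all add: has_real_derivative_iff_has_vector_derivative)

lemma complex_core:
  assumes nm: "neutral_mode sinus_flow c \<alpha> \<beta> \<phi>" and al: "3*pi^2/4 \<le> \<alpha>^2"
    and be: "-(pi^2/2) \<le> \<beta>" "\<beta> \<le> pi^2/2"
  shows "c = Ub \<beta> \<and> \<alpha>^2 = 3*pi^2/4 \<and> (\<exists>k::complex. \<forall>y\<in>{-1..1}. \<phi> y = k * complex_of_real (cos (pi*y/2)))"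
proof -
  have nm': "\<alpha> > 0 \<and> (\<exists>y\<in>{-1..1}. \<phi> y \<noteq> 0) \<and> \<phi> (-1) = 0 \<and> \<phi> 1 = 0 \<and>
     (\<exists>\<phi>' \<phi>''. H2_with \<phi> \<phi>' \<phi>'' \<and> (AE y in lebesgue. y \<in> {-1<..<1} \<longrightarrow> sinus_flow y \<noteq> c \<longrightarrow>
           - \<phi>'' y + complex_of_real (\<alpha>\<^sup>2) * \<phi> y
             - complex_of_real ((\<beta> - deriv (deriv sinus_flow) y) / (sinus_flow y - c)) * \<phi> y = 0))"
    using nm unfolding neutral_mode_def .
  note nt = conjunct1[OF conjunct2[OF nm']]
  note bm = conjunct1[OF conjunct2[OF conjunct2[OF nm']]]
  note bp = conjunct1[OF conjunct2[OF conjunct2[OF conjunct2[OF nm']]]]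
  note ex = conjunct2[OF conjunct2[OF conjunct2[OF conjunct2[OF nm']]]]
  obtain \<phi>' \<phi>'' where HA: "H2_with \<phi> \<phi>' \<phi>'' \<and> (AE y in lebesgue. y \<in> {-1<..<1} \<longrightarrow> sinus_flow y \<noteq> c \<longrightarrow>
           - \<phi>'' y + complex_of_real (\<alpha>\<^sup>2) * \<phi> y
             - complex_of_real ((\<beta> - deriv (deriv sinus_flow) y) / (sinus_flow y - c)) * \<phi> y = 0)"
    using ex by (elim exE) (rule that)
  note H = conjunct1[OF HA]
  note AE = conjunct2[OF HA]
  have i2: "\<phi>'' absolutely_integrable_on {-1..1}"
    and hi: "\<And>a b. -1 \<le> a \<Longrightarrow> a \<le> b \<Longrightarrow> b \<le> 1 \<Longrightarrow> (\<phi>'' has_integral (\<phi>' b - \<phi>' a)) {a..b} \<and> (\<phi>' has_integral (\<phi> b - \<phi> a)) {a..b}"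
    using H unfolding H2_with_def by auto
  have i2': "\<phi>'' integrable_on {-1..1}" using i2 by (simp add: absolutely_integrable_on_def)
  have phi'_eq: "\<phi>' x = \<phi>' (-1) + integral {-1..x} \<phi>''" if "x \<in> {-1..1}" for x
    using hi[of "-1" x] that by (auto dest: integral_unique)
  have cphi': "continuous_on {-1..1} \<phi>'"
  proof (rule continuous_on_eq)
    show "continuous_on {-1..1} (\<lambda>x. \<phi>' (-1) + integral {-1..x} \<phi>'')"
      by (rule continuous_on_add[OF continuous_on_const indefinite_integral_continuous_1[OF i2']])
    show "\<phi>' (-1) + integral {-1..x} \<phi>'' = \<phi>' x" if "x \<in> {-1..1}" for x using phi'_eq[OF that] by simp
  qed
  have i1: "\<phi>' integrable_on {-1..1}" using cphi' by (rule integrable_continuous_real)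
  have phi_eq: "\<phi> x = \<phi> (-1) + integral {-1..x} \<phi>'" if "x \<in> {-1..1}" for x
    using hi[of "-1" x] that by (auto dest: integral_unique)
  have cphi: "continuous_on {-1..1} \<phi>"
  proof (rule continuous_on_eq)
    show "continuous_on {-1..1} (\<lambda>x. \<phi> (-1) + integral {-1..x} \<phi>')"
      by (rule continuous_on_add[OF continuous_on_const indefinite_integral_continuous_1[OF i1]])
    show "\<phi> (-1) + integral {-1..x} \<phi>' = \<phi> x" if "x \<in> {-1..1}" for x using phi_eq[OF that] by simp
  qed
  have dphi: "(\<phi> has_vector_derivative \<phi>' x) (at x)" if "-1 < x" "x < 1" for x
  proof -
    have x: "x \<in> {-1..1}" using that by auto
    have d1: "((\<lambda>x. integral {-1..x} \<phi>') has_vector_derivative \<phi>' x) (at x within {-1..1})"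
      by (rule integral_has_vector_derivative[OF cphi' x])
    have d2: "((\<lambda>x. \<phi> (-1) + integral {-1..x} \<phi>') has_vector_derivative \<phi>' x) (at x within {-1..1})"
      using has_vector_derivative_add[OF has_vector_derivative_const d1] by simp
    have D: "(\<phi> has_vector_derivative \<phi>' x) (at x within {-1..1})"
      by (rule has_vector_derivative_transform[OF x phi_eq d2])
    have "x \<in> interior {-1..1}" using that by simp
    hence eq: "at x within {-1..1} = at x" by (rule at_within_interior)
    show ?thesis using D unfolding eq .
  qed
  obtain N where N: "\<And>x. x \<in> space lebesgue - N \<Longrightarrow> (x \<in> {-1<..<1} \<longrightarrow> sinus_flow x \<noteq> c \<longrightarrow>
           - \<phi>'' x + complex_of_real (\<alpha>\<^sup>2) * \<phi> x
             - complex_of_real ((\<beta> - deriv (deriv sinus_flow) x) / (sinus_flow x - c)) * \<phi> x = 0)"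
    and Nnull: "N \<in> null_sets lebesgue"
    using AE_E3[OF AE] by blast
  define N' where "N' = N \<union> {y \<in> {-1<..<1}. sinus_flow y = c}"
  have negN': "negligible N'" unfolding N'_def using Nnull Zneg[of c]
    by (auto simp: negligible_iff_null_sets[symmetric])
  have ae: "\<phi>'' x = complex_of_real (qf \<alpha> \<beta> c x) * \<phi> x" if "x \<in> {-1<..<1}" "x \<notin> N'" for x
  proof -
    have xN: "x \<in> space lebesgue - N" using that unfolding N'_def by auto
    have Ux: "sinus_flow x \<noteq> c" using that unfolding N'_def by auto
    have eq: "- \<phi>'' x + complex_of_real (\<alpha>\<^sup>2) * \<phi> x
             - complex_of_real ((\<beta> - deriv (deriv sinus_flow) x) / (sinus_flow x - c)) * \<phi> x = 0"
      using N[OF xN] that Ux by blast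
    hence "\<phi>'' x = complex_of_real (\<alpha>\<^sup>2) * \<phi> x - complex_of_real ((\<beta> - deriv (deriv sinus_flow) x) / (sinus_flow x - c)) * \<phi> x"
      by (simp add: algebra_simps)
    also have "\<dots> = complex_of_real (\<alpha>\<^sup>2 - (\<beta> - deriv (deriv sinus_flow) x) / (sinus_flow x - c)) * \<phi> x"
      by (simp add: algebra_simps)
    also have "\<dots> = complex_of_real (qf \<alpha> \<beta> c x) * \<phi> x" using K_eq[OF Ux] by simp
    finally show ?thesis .
  qed
  have dphi': "(\<phi>' has_vector_derivative (complex_of_real (qf \<alpha> \<beta> c y) * \<phi> y)) (at y)"
    if st: "-1 \<le> s" "t \<le> 1" and reg: "c = Ub \<beta> \<or> (\<forall>x. s < x \<longrightarrow> x < t \<longrightarrow> sinus_flow x \<noteq> c)"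
      and y: "s < y" "y < t" for s t y
  proof -
    define g where "g x = complex_of_real (qf \<alpha> \<beta> c x) * \<phi> x" for x
    define s' where "s' = (s + y)/2"
    define t' where "t' = (y + t)/2"
    have s't': "s < s'" "s' < y" "y < t'" "t' < t" unfolding s'_def t'_def using y by auto
    have cq: "continuous_on {s'..t'} (qf \<alpha> \<beta> c)"
    proof (cases "c = Ub \<beta>")
      case True
      have "qf \<alpha> \<beta> c = (\<lambda>x. \<alpha>^2 - pi^2)" unfolding qf_def[abs_def] True by simp
      thus ?thesis by simp
    next
      case False
      hence "\<forall>x. s < x \<longrightarrow> x < t \<longrightarrow> sinus_flow x \<noteq> c" using reg by auto
      hence nz: "\<And>x. x \<in> {s'..t'} \<Longrightarrow> sinus_flow x - c \<noteq> 0" using s't' by force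
      show ?thesis unfolding qf_def[abs_def] sinus_flow_def
        using nz unfolding sinus_flow_def by (intro continuous_intros) auto
    qed
    have cg: "continuous_on {s'..t'} g" unfolding g_def
      using cq continuous_on_subset[OF cphi, of "{s'..t'}"] s't' st
      by (intro continuous_intros) auto
    have rep: "\<phi>' x = \<phi>' s' + integral {s'..x} g" if "x \<in> {s'..t'}" for x
    proof -
      have "(\<phi>'' has_integral (\<phi>' x - \<phi>' s')) {s'..x}" using hi[of s' x] that s't' st by auto
      hence "(g has_integral (\<phi>' x - \<phi>' s')) {s'..x}"
      proof (rule has_integral_spike[OF negN', rotated])
        fix z assume z: "z \<in> {s'..x} - N'"
        have "z \<in> {-1<..<1}" using z that s't' st by auto
        thus "g z = \<phi>'' z" using ae z unfolding g_def by auto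
      qed
      thus ?thesis by (auto dest: integral_unique)
    qed
    have yy: "y \<in> {s'..t'}" using s't' by auto
    have d1: "((\<lambda>x. integral {s'..x} g) has_vector_derivative g y) (at y within {s'..t'})"
      by (rule integral_has_vector_derivative[OF cg yy])
    have d2: "((\<lambda>x. \<phi>' s' + integral {s'..x} g) has_vector_derivative g y) (at y within {s'..t'})"
      using has_vector_derivative_add[OF has_vector_derivative_const d1] by simp
    have D: "(\<phi>' has_vector_derivative g y) (at y within {s'..t'})"
      by (rule has_vector_derivative_transform[OF yy rep d2])
    have "y \<in> interior {s'..t'}" using s't' by simp
    hence eq: "at y within {s'..t'} = at y" by (rule at_within_interior)
    show ?thesis using D unfolding eq g_def .
  qed
  have cRe: "continuous_on {-1..1} (\<lambda>y. Re (\<phi> y))" "continuous_on {-1..1} (\<lambda>y. Re (\<phi>' y))"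
    "continuous_on {-1..1} (\<lambda>y. Im (\<phi> y))" "continuous_on {-1..1} (\<lambda>y. Im (\<phi>' y))"
    using cphi cphi' by (auto intro!: continuous_intros)
  have RC: "(c \<noteq> Ub \<beta> \<or> \<alpha>^2 > 3*pi^2/4 \<longrightarrow> (\<forall>y\<in>{-1..1}. Re (\<phi> y) = 0))
       \<and> (c = Ub \<beta> \<longrightarrow> \<alpha>^2 = 3*pi^2/4 \<longrightarrow> (\<exists>k. \<forall>y\<in>{-1..1}. Re (\<phi> y) = k * cos (pi*y/2)))"
  proof (rule real_core[OF al be cRe(1) cRe(2)])
    show "DERIV (\<lambda>y. Re (\<phi> y)) y :> Re (\<phi>' y)" if "-1 < y" "y < 1" for y
      using Re_Im_deriv(1)[OF dphi[OF that]] .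
    show "DERIV (\<lambda>y. Re (\<phi>' y)) y :> qf \<alpha> \<beta> c y * Re (\<phi> y)"
      if "-1 \<le> s" "t \<le> 1" "c = Ub \<beta> \<or> (\<forall>x. s < x \<longrightarrow> x < t \<longrightarrow> sinus_flow x \<noteq> c)" "s < y" "y < t" for s t y
      using Re_Im_deriv(1)[OF dphi'[OF that]] by simp
    show "Re (\<phi> (-1)) = 0" "Re (\<phi> 1) = 0" using bm bp by auto
  qed
  have IC: "(c \<noteq> Ub \<beta> \<or> \<alpha>^2 > 3*pi^2/4 \<longrightarrow> (\<forall>y\<in>{-1..1}. Im (\<phi> y) = 0))
       \<and> (c = Ub \<beta> \<longrightarrow> \<alpha>^2 = 3*pi^2/4 \<longrightarrow> (\<exists>k. \<forall>y\<in>{-1..1}. Im (\<phi> y) = k * cos (pi*y/2)))"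
  proof (rule real_core[OF al be cRe(3) cRe(4)])
    show "DERIV (\<lambda>y. Im (\<phi> y)) y :> Im (\<phi>' y)" if "-1 < y" "y < 1" for y
      using Re_Im_deriv(2)[OF dphi[OF that]] .
    show "DERIV (\<lambda>y. Im (\<phi>' y)) y :> qf \<alpha> \<beta> c y * Im (\<phi> y)"
      if "-1 \<le> s" "t \<le> 1" "c = Ub \<beta> \<or> (\<forall>x. s < x \<longrightarrow> x < t \<longrightarrow> sinus_flow x \<noteq> c)" "s < y" "y < t" for s t y
      using Re_Im_deriv(2)[OF dphi'[OF that]] by simp
    show "Im (\<phi> (-1)) = 0" "Im (\<phi> 1) = 0" using bm bp by auto
  qed
  have notz: "\<not> (c \<noteq> Ub \<beta> \<or> \<alpha>^2 > 3*pi^2/4)"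
  proof
    assume A: "c \<noteq> Ub \<beta> \<or> \<alpha>^2 > 3*pi^2/4"
    have "\<forall>y\<in>{-1..1}. \<phi> y = 0"
      using RC IC A by (auto simp: complex_eq_iff)
    thus False using nt by auto
  qed
  hence cU: "c = Ub \<beta>" and a2: "\<alpha>^2 = 3*pi^2/4" using al by auto
  obtain kr where kr: "\<forall>y\<in>{-1..1}. Re (\<phi> y) = kr * cos (pi*y/2)" using RC cU a2 by blast
  obtain ki where ki: "\<forall>y\<in>{-1..1}. Im (\<phi> y) = ki * cos (pi*y/2)" using IC cU a2 by blast
  have "\<forall>y\<in>{-1..1}. \<phi> y = Complex kr ki * complex_of_real (cos (pi*y/2))"
    using kr ki by (auto simp: complex_eq_iff)
  thus ?thesis using cU a2 by blast
qed

lemma exist_mode: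
  assumes ap: "\<alpha> > 0" and a2: "\<alpha>^2 = 3*pi^2/4"
  shows "neutral_mode sinus_flow (1/2 - \<beta>/pi^2) \<alpha> \<beta> (\<lambda>y. complex_of_real (cos (pi*y/2)))"
proof -
  define f where "f y = complex_of_real (cos (pi*y/2))" for y
  define f1 where "f1 y = complex_of_real (-(pi/2) * sin (pi*y/2))" for y
  define f2 where "f2 y = complex_of_real (-(pi^2/4) * cos (pi*y/2))" for y
  have df: "(f has_vector_derivative f1 y) (at y)" for y
  proof -
    have "DERIV (\<lambda>y. cos (pi*y/2)) y :> -(pi/2) * sin (pi*y/2)"
      by (auto intro!: derivative_eq_intros)
    thus ?thesis unfolding f_def f1_def by (rule has_vector_derivative_of_real)
  qed
  have df1: "(f1 has_vector_derivative f2 y) (at y)" for y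
  proof -
    have "DERIV (\<lambda>y. -(pi/2) * sin (pi*y/2)) y :> -(pi^2/4) * cos (pi*y/2)"
      by (auto intro!: derivative_eq_intros simp: power2_eq_square)
    thus ?thesis unfolding f1_def f2_def by (rule has_vector_derivative_of_real)
  qed
  have cf2: "continuous_on {-1..1} f2" unfolding f2_def by (intro continuous_intros) auto
  have H: "H2_with f f1 f2"
    unfolding H2_with_def
  proof (intro conjI allI impI)
    show "f2 absolutely_integrable_on {-1..1}" using cf2 by (rule absolutely_integrable_continuous_real)
    have "continuous_on {-1..1} (\<lambda>x. (norm (f2 x))\<^sup>2)" using cf2 by (intro continuous_intros)
    thus "(\<lambda>x. (norm (f2 x))\<^sup>2) integrable_on {-1..1}" by (rule integrable_continuous_real)
    fix a b :: real assume ab: "-1 \<le> a" "a \<le> b" "b \<le> 1"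
    show "(f2 has_integral (f1 b - f1 a)) {a..b}"
      using ab(2) by (rule fundamental_theorem_of_calculus) (rule has_vector_derivative_at_within[OF df1])
    show "(f1 has_integral (f b - f a)) {a..b}"
      using ab(2) by (rule fundamental_theorem_of_calculus) (rule has_vector_derivative_at_within[OF df])
  qed
  have Ub: "Ub \<beta> = 1/2 - \<beta>/pi^2" unfolding Ub_def ..
  have eqn: "- f2 y + complex_of_real (\<alpha>\<^sup>2) * f y
      - complex_of_real ((\<beta> - deriv (deriv sinus_flow) y) / (sinus_flow y - (1/2 - \<beta>/pi^2))) * f y = 0"
    if "y \<in> {-1<..<1}" "sinus_flow y \<noteq> 1/2 - \<beta>/pi^2" for y
  proof -
    have K: "\<alpha>^2 - (\<beta> - deriv (deriv sinus_flow) y) / (sinus_flow y - (1/2 - \<beta>/pi^2)) = qf \<alpha> \<beta> (1/2 - \<beta>/pi^2) y"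
      by (rule K_eq) (use that in auto)
    have q: "qf \<alpha> \<beta> (1/2 - \<beta>/pi^2) y = \<alpha>^2 - pi^2" unfolding qf_def Ub by simp
    have Kp: "(\<beta> - deriv (deriv sinus_flow) y) / (sinus_flow y - (1/2 - \<beta>/pi^2)) = pi^2"
      using K q by simp
    have "- f2 y + complex_of_real (\<alpha>\<^sup>2) * f y
      - complex_of_real ((\<beta> - deriv (deriv sinus_flow) y) / (sinus_flow y - (1/2 - \<beta>/pi^2))) * f y
      = complex_of_real ((pi^2/4 + \<alpha>^2 - pi^2) * cos (pi*y/2))"
      unfolding Kp f_def f2_def by (simp add: algebra_simps)
    also have "pi^2/4 + \<alpha>^2 - pi^2 = 0" using a2 by simp
    finally show ?thesis by simp
  qed
  show ?thesis
    unfolding neutral_mode_def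
  proof (intro conjI exI)
    show "\<alpha> > 0" by (rule ap)
    show "\<exists>y\<in>{-1..1}. complex_of_real (cos (pi*y/2)) \<noteq> 0" by (rule bexI[of _ 0]) auto
    show "complex_of_real (cos (pi * (-1) / 2)) = 0" by simp
    show "complex_of_real (cos (pi * 1 / 2)) = 0" by simp
    show "H2_with (\<lambda>y. complex_of_real (cos (pi*y/2))) f1 f2" using H unfolding f_def .
    show "AE y in lebesgue. y \<in> {-1<..<1} \<longrightarrow> sinus_flow y \<noteq> 1/2 - \<beta>/pi^2 \<longrightarrow>
           - f2 y + complex_of_real (\<alpha>\<^sup>2) * complex_of_real (cos (pi*y/2))
             - complex_of_real ((\<beta> - deriv (deriv sinus_flow) y) / (sinus_flow y - (1/2 - \<beta>/pi^2))) * complex_of_real (cos (pi*y/2)) = 0"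
      using eqn unfolding f_def by (intro always_eventually allI impI) auto
  qed
qed

theorem lemma6p1:
  fixes \<beta> :: real
  assumes "-(pi\<^sup>2/2) \<le> \<beta>" and "\<beta> \<le> pi\<^sup>2/2"
  shows "(\<forall>\<alpha>>0. \<alpha>\<^sup>2 > 3 * pi\<^sup>2 / 4 \<longrightarrow> \<not> (\<exists>c \<phi>. neutral_mode sinus_flow c \<alpha> \<beta> \<phi>))
       \<and> (\<forall>\<alpha>>0. \<alpha>\<^sup>2 = 3 * pi\<^sup>2 / 4 \<longrightarrow>
            neutral_mode sinus_flow (1/2 - \<beta> / pi\<^sup>2) \<alpha> \<beta> (\<lambda>y. complex_of_real (cos (pi * y / 2)))
          \<and> (\<forall>c \<phi>. neutral_mode sinus_flow c \<alpha> \<beta> \<phi> \<longrightarrow>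
               c = 1/2 - \<beta> / pi\<^sup>2 \<and>
               (\<exists>k::complex. \<forall>y\<in>{-1..1}. \<phi> y = k * complex_of_real (cos (pi * y / 2)))))"
proof (rule conjI)
  show "\<forall>\<alpha>>0. \<alpha>\<^sup>2 > 3 * pi\<^sup>2 / 4 \<longrightarrow> \<not> (\<exists>c \<phi>. neutral_mode sinus_flow c \<alpha> \<beta> \<phi>)"
  proof (intro allI impI)
    fix \<alpha> :: real assume ap: "\<alpha> > 0" and a: "\<alpha>\<^sup>2 > 3 * pi\<^sup>2 / 4"
    show "\<not> (\<exists>c \<phi>. neutral_mode sinus_flow c \<alpha> \<beta> \<phi>)"
    proof
      assume "\<exists>c \<phi>. neutral_mode sinus_flow c \<alpha> \<beta> \<phi>"
      then obtain c \<phi> where nm: "neutral_mode sinus_flow c \<alpha> \<beta> \<phi>" by blast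
      have al: "3*pi^2/4 \<le> \<alpha>^2" using a by simp
      have "\<alpha>^2 = 3*pi^2/4" using complex_core[OF nm al assms] by blast
      thus False using a by simp
    qed
  qed
next
  show "\<forall>\<alpha>>0. \<alpha>\<^sup>2 = 3 * pi\<^sup>2 / 4 \<longrightarrow>
            neutral_mode sinus_flow (1/2 - \<beta> / pi\<^sup>2) \<alpha> \<beta> (\<lambda>y. complex_of_real (cos (pi * y / 2)))
          \<and> (\<forall>c \<phi>. neutral_mode sinus_flow c \<alpha> \<beta> \<phi> \<longrightarrow>
               c = 1/2 - \<beta> / pi\<^sup>2 \<and>
               (\<exists>k::complex. \<forall>y\<in>{-1..1}. \<phi> y = k * complex_of_real (cos (pi * y / 2))))"
  proof (intro allI impI)
    fix \<alpha> :: real assume ap: "\<alpha> > 0" and a: "\<alpha>\<^sup>2 = 3 * pi\<^sup>2 / 4"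
    show "neutral_mode sinus_flow (1/2 - \<beta> / pi\<^sup>2) \<alpha> \<beta> (\<lambda>y. complex_of_real (cos (pi * y / 2)))
          \<and> (\<forall>c \<phi>. neutral_mode sinus_flow c \<alpha> \<beta> \<phi> \<longrightarrow>
               c = 1/2 - \<beta> / pi\<^sup>2 \<and>
               (\<exists>k::complex. \<forall>y\<in>{-1..1}. \<phi> y = k * complex_of_real (cos (pi * y / 2))))"
    proof (rule conjI)
      show "neutral_mode sinus_flow (1/2 - \<beta> / pi\<^sup>2) \<alpha> \<beta> (\<lambda>y. complex_of_real (cos (pi * y / 2)))"
        using exist_mode[OF ap a] .
      show "\<forall>c \<phi>. neutral_mode sinus_flow c \<alpha> \<beta> \<phi> \<longrightarrow>
               c = 1/2 - \<beta> / pi\<^sup>2 \<and>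
               (\<exists>k::complex. \<forall>y\<in>{-1..1}. \<phi> y = k * complex_of_real (cos (pi * y / 2)))"
      proof (intro allI impI)
        fix c \<phi> assume nm: "neutral_mode sinus_flow c \<alpha> \<beta> \<phi>"
        have al: "3*pi^2/4 \<le> \<alpha>^2" using a by simp
        have cc: "c = Ub \<beta> \<and> \<alpha>^2 = 3*pi^2/4 \<and> (\<exists>k::complex. \<forall>y\<in>{-1..1}. \<phi> y = k * complex_of_real (cos (pi*y/2)))"
          using complex_core[OF nm al assms] .
        thus "c = 1/2 - \<beta> / pi\<^sup>2 \<and>
               (\<exists>k::complex. \<forall>y\<in>{-1..1}. \<phi> y = k * complex_of_real (cos (pi * y / 2)))"
          unfolding Ub_def by blast
      qed
    qed
  qed
qed

end
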